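(* Let $\mathcal A\in\mathbb R^{n\times p\times l}$ with $n\ge p$. Then $\mathcal A$ can be written as $\mathcal A=\mathcal P*\mathcal H$ with $\mathcal P\in\mathrm{St}(n,p,l)$ and $\mathcal H\in\mathbb R^{p\times p\times l}$ symmetric t-positive semidefinite, and $\mathcal H$ is unique. Furthermore, if $\mathcal A^\top*\mathcal A$ is symmetric t-positive definite, then $\mathcal P$ is unique and $\mathcal H$ is symmetric t-positive definite.
   Context: Frontal slices $A^{(i)}=\mathcal A(:,:,i)$. The t-product is $\mathcal A*\mathcal B=\operatorname{fold}(\operatorname{bcirc}(\mathcal A)\operatorname{unfold}(\mathcal B))$, where $\operatorname{bcirc}(\mathcal A)$ is the block circulant matrix with $(i,j)$ block $A^{(((i-j)\bmod l)+1)}$, $\operatorname{unfold}$ stacks frontal slices vertically, $\operatorname{fold}$ is its inverse. Transpose: $\mathcal A^\top$ has frontal slices $(A^{(1)})^\top,(A^{(l)})^\top,\dots,(A^{(2)})^\top$. $\mathcal I$ identity tensor. $\mathrm{St}(n,p,l)=\{\mathcal X\in\mathbb R^{n\times p\times l}:\mathcal X^\top*\mathcal X=\mathcal I\}$. A tensor $\mathcal H\in\mathbb R^{p\times p\times l}$ is symmetric if $\mathcal H^\top=\mathcal H$; a symmetric $\mathcal H$ is t-positive semidefinite (definite) if $\langle\mathcal Z,\mathcal H*\mathcal Z\rangle\ge0$ ($>0$) for all (nonzero) $\mathcal Z\in\mathbb R^{p\times1\times l}$, where $\langle\cdot,\cdot\rangle$ is the entrywise inner product. *)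

theory Defs
  imports Complex_Main
begin

text \<open>Third-order real tensors are represented as functions of three natural
indices (0-based: row, column, frontal slice).\<close>

type_synonym tensor = "nat \<Rightarrow> nat \<Rightarrow> nat \<Rightarrow> real"

definition is_tensor :: "nat \<Rightarrow> nat \<Rightarrow> nat \<Rightarrow> tensor \<Rightarrow> bool" where
  "is_tensor n p l A \<longleftrightarrow> (\<forall>i j k. (n \<le> i \<or> p \<le> j \<or> l \<le> k) \<longrightarrow> A i j k = 0)"

text \<open>t-product of A (n x p x l) and B (p x q x l): frontal slice k of the result is
  sum over t of A^((k-t) mod l) B^(t), i.e. fold (bcirc A * unfold B).\<close>
definition tprod :: "nat \<Rightarrow> nat \<Rightarrow> tensor \<Rightarrow> tensor \<Rightarrow> tensor" where
  "tprod p l A B = (\<lambda>i j k. if k < l then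
      (\<Sum>t<l. \<Sum>m<p. A i m ((k + l - t) mod l) * B m j t) else 0)"

definition ttrans :: "nat \<Rightarrow> tensor \<Rightarrow> tensor" where
  "ttrans l A = (\<lambda>i j k. if k < l then A j i ((l - k) mod l) else 0)"

definition tid :: "nat \<Rightarrow> tensor" where
  "tid p = (\<lambda>i j k. if i = j \<and> i < p \<and> k = 0 then 1 else 0)"

definition tinner :: "nat \<Rightarrow> nat \<Rightarrow> nat \<Rightarrow> tensor \<Rightarrow> tensor \<Rightarrow> real" where
  "tinner n p l A B = (\<Sum>i<n. \<Sum>j<p. \<Sum>k<l. A i j k * B i j k)"

definition Stiefel :: "nat \<Rightarrow> nat \<Rightarrow> nat \<Rightarrow> tensor set" where
  "Stiefel n p l = {X. is_tensor n p l X \<and> tprod n l (ttrans l X) X = tid p}"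

definition tsym :: "nat \<Rightarrow> nat \<Rightarrow> tensor \<Rightarrow> bool" where
  "tsym p l H \<longleftrightarrow> is_tensor p p l H \<and> ttrans l H = H"

definition t_psd :: "nat \<Rightarrow> nat \<Rightarrow> tensor \<Rightarrow> bool" where
  "t_psd p l H \<longleftrightarrow> tsym p l H \<and>
     (\<forall>Z. is_tensor p 1 l Z \<longrightarrow> 0 \<le> tinner p 1 l Z (tprod p l H Z))"

definition t_pd :: "nat \<Rightarrow> nat \<Rightarrow> tensor \<Rightarrow> bool" where
  "t_pd p l H \<longleftrightarrow> tsym p l H \<and>
     (\<forall>Z. is_tensor p 1 l Z \<longrightarrow> Z \<noteq> (\<lambda>_ _ _. 0) \<longrightarrow> 0 < tinner p 1 l Z (tprod p l H Z))"

end

theory Submission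
  imports Defs "Jordan_Normal_Form.Char_Poly" "Jordan_Normal_Form.Determinant"
begin


definition sb :: "nat \<Rightarrow> nat \<Rightarrow> nat \<Rightarrow> nat" where
  "sb l k t = (k + l - t) mod l"

lemma sb_int: assumes "t \<le> l" shows "int (sb l k t) = (int k - int t) mod int l"
proof -
  have "int (k + l - t) = (int k - int t) + int l" using assms by simp
  hence "int (sb l k t) = ((int k - int t) + int l) mod int l" unfolding sb_def zmod_int by simp
  thus ?thesis by simp
qed

lemma sb_lt: "0 < l \<Longrightarrow> sb l k t < l" unfolding sb_def by simp

lemma int_mod_cancel_left: "((a::int) - x) mod l = (a - y) mod l \<Longrightarrow> x mod l = y mod l"
  using mod_diff_cong[OF refl, of "a - x" l "a - y" a] by simp

lemma nat_eq_via_int: "int a = int b \<Longrightarrow> a = b" by simp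

lemma sb_sb: assumes "0 < l" "t < l" "s < l" shows "sb l (sb l k t) s = sb l k ((s + t) mod l)"
proof (rule nat_eq_via_int)
  have "int (sb l (sb l k t) s) = (int (sb l k t) - int s) mod int l" by (rule sb_int) (use assms in simp)
  also have "\<dots> = ((int k - int t) mod int l - int s) mod int l" using sb_int[of t l k] assms by simp
  also have "\<dots> = (int k - int t - int s) mod int l" by (rule mod_diff_left_eq)
  also have "\<dots> = (int k - (int s + int t)) mod int l" by (simp add: algebra_simps)
  also have "\<dots> = (int k - (int s + int t) mod int l) mod int l" by (rule mod_diff_right_eq[symmetric])
  also have "\<dots> = (int k - int ((s + t) mod l)) mod int l" by (simp add: zmod_int)
  also have "\<dots> = int (sb l k ((s + t) mod l))" by (rule sb_int[symmetric]) (use assms in simp)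
  finally show "int (sb l (sb l k t) s) = int (sb l k ((s + t) mod l))" .
qed

lemma sb_shift: assumes "0 < l" "t < l" "s < l" shows "sb l ((s + t) mod l) t = s"
proof (rule nat_eq_via_int)
  have "int (sb l ((s + t) mod l) t) = (int ((s + t) mod l) - int t) mod int l" by (rule sb_int) (use assms in simp)
  also have "\<dots> = ((int s + int t) mod int l - int t) mod int l" by (simp add: zmod_int)
  also have "\<dots> = (int s + int t - int t) mod int l" by (rule mod_diff_left_eq)
  also have "\<dots> = int s" using assms by simp
  finally show "int (sb l ((s + t) mod l) t) = int s" .
qed

lemma sb_0_sb: assumes "0 < l" "t < l" "k < l" shows "sb l 0 (sb l t k) = sb l k t"
proof (rule nat_eq_via_int)
  have "int (sb l 0 (sb l t k)) = (0 - int (sb l t k)) mod int l" using sb_int[of "sb l t k" l 0] less_imp_le[OF sb_lt[OF assms(1), of t k]] by simp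
  also have "\<dots> = (0 - (int t - int k) mod int l) mod int l" using sb_int[of k l t] assms by simp
  also have "\<dots> = (0 - (int t - int k)) mod int l" by (rule mod_diff_right_eq)
  also have "\<dots> = (int k - int t) mod int l" by simp
  also have "\<dots> = int (sb l k t)" by (rule sb_int[symmetric]) (use assms in simp)
  finally show "int (sb l 0 (sb l t k)) = int (sb l k t)" .
qed

lemma sb_same: "0 < l \<Longrightarrow> k < l \<Longrightarrow> sb l k k = 0" unfolding sb_def by simp
lemma sb_zero: "0 < l \<Longrightarrow> k < l \<Longrightarrow> sb l k 0 = k" unfolding sb_def by simp

lemma sb_inv: assumes "0 < l" "t < l" "k < l" shows "sb l k (sb l k t) = t"
proof (rule nat_eq_via_int)
  have "int (sb l k (sb l k t)) = (int k - int (sb l k t)) mod int l" using sb_int[of "sb l k t" l k] less_imp_le[OF sb_lt[OF assms(1), of k t]] by simp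
  also have "\<dots> = (int k - (int k - int t) mod int l) mod int l" using sb_int[of t l k] assms by simp
  also have "\<dots> = (int k - (int k - int t)) mod int l" by (rule mod_diff_right_eq)
  also have "\<dots> = int t" using assms by simp
  finally show "int (sb l k (sb l k t)) = int t" .
qed

lemma sb_eq0_iff: "0 < l \<Longrightarrow> k < l \<Longrightarrow> t < l \<Longrightarrow> sb l k t = 0 \<longleftrightarrow> t = k"
proof
  assume "0 < l" "k < l" "t < l" "sb l k t = 0"
  thus "t = k" using sb_inv[of l t k] sb_zero[of l k] by simp
qed (simp add: sb_same)

lemma inj_mod: assumes "0 < (l::nat)" "c < l" shows "inj_on (\<lambda>t. (t + c) mod l) {..<l}"
  proof
    fix x y assume "x \<in> {..<l}" "y \<in> {..<l}" and e: "(x + c) mod l = (y + c) mod l"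
    have "x = sb l ((x + c) mod l) c" using sb_shift[OF assms(1) assms(2), of x] \<open>x \<in> _\<close> by simp
    also have "\<dots> = sb l ((y + c) mod l) c" by (simp only: e)
    also have "\<dots> = y" using sb_shift[OF assms(1) assms(2), of y] \<open>y \<in> _\<close> by simp
    finally show "x = y" .
  qed
lemma inj_sb: assumes "0 < l" "k < l" shows "inj_on (sb l k) {..<l}"
proof
  fix x y assume "x \<in> {..<l}" "y \<in> {..<l}" and e: "sb l k x = sb l k y"
  have "x = sb l k (sb l k x)" using sb_inv[OF assms(1) _ assms(2), of x] \<open>x \<in> _\<close> by simp
  also have "\<dots> = sb l k (sb l k y)" by (simp only: e)
  also have "\<dots> = y" using sb_inv[OF assms(1) _ assms(2), of y] \<open>y \<in> _\<close> by simp
  finally show "x = y" .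
qed

lemma sum_reindex_inj:
  assumes inj: "inj_on g {..<l}" and sub: "g ` {..<l} \<subseteq> {..<(l::nat)}"
  shows "(\<Sum>t<l. f (g t)) = (\<Sum>t<l. (f t :: 'a::comm_monoid_add))"
proof -
  have e: "g ` {..<l} = {..<l}"
    by (rule endo_inj_surj[OF _ sub inj]) simp
  have "(\<Sum>t<l. f (g t)) = sum f (g ` {..<l})" by (simp add: sum.reindex[OF inj])
  thus ?thesis unfolding e .
qed

lemma sum_reindex_mod:
  assumes "0 < l" "c < l"
  shows "(\<Sum>t<l. f ((t + c) mod l)) = (\<Sum>t<(l::nat). (f t :: 'a::comm_monoid_add))"
  by (rule sum_reindex_inj[OF inj_mod[OF assms]]) (use assms in auto)

lemma sum_reindex_sb:
  assumes "0 < l" "k < l"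
  shows "(\<Sum>t<l. f (sb l k t)) = (\<Sum>t<(l::nat). (f t :: 'a::comm_monoid_add))"
  by (rule sum_reindex_inj[OF inj_sb[OF assms]]) (use assms sb_lt in auto)


lemma swap4: "(\<Sum>a\<in>A. \<Sum>b\<in>B. \<Sum>c\<in>C. \<Sum>d\<in>D. f a b c d) = (\<Sum>c\<in>C. \<Sum>d\<in>D. \<Sum>a\<in>A. \<Sum>b\<in>B. (f a b c d :: real))"
proof -
  have "(\<Sum>a\<in>A. \<Sum>b\<in>B. \<Sum>c\<in>C. \<Sum>d\<in>D. f a b c d) = (\<Sum>a\<in>A. \<Sum>c\<in>C. \<Sum>b\<in>B. \<Sum>d\<in>D. f a b c d)"
    by (rule sum.cong[OF refl], rule sum.swap)
  also have "\<dots> = (\<Sum>c\<in>C. \<Sum>a\<in>A. \<Sum>b\<in>B. \<Sum>d\<in>D. f a b c d)" by (rule sum.swap)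
  also have "\<dots> = (\<Sum>c\<in>C. \<Sum>a\<in>A. \<Sum>d\<in>D. \<Sum>b\<in>B. f a b c d)"
    by (rule sum.cong[OF refl], rule sum.cong[OF refl], rule sum.swap)
  also have "\<dots> = (\<Sum>c\<in>C. \<Sum>d\<in>D. \<Sum>a\<in>A. \<Sum>b\<in>B. f a b c d)"
    by (rule sum.cong[OF refl], rule sum.swap)
  finally show ?thesis .
qed

lemma tprod_sb: "tprod p l A B i j k = (if k < l then (\<Sum>t<l. \<Sum>m<p. A i m (sb l k t) * B m j t) else 0)"
  by (simp add: tprod_def sb_def)

lemma ttrans_sb: "ttrans l A i j k = (if k < l then A j i (sb l 0 k) else 0)"
  by (simp add: ttrans_def sb_def)

lemma tprod_assoc:
  assumes l: "0 < l"
  shows "tprod q l (tprod p l A B) C = tprod p l A (tprod q l B C)"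
proof (intro ext)
  fix i j k
  show "tprod q l (tprod p l A B) C i j k = tprod p l A (tprod q l B C) i j k"
  proof (cases "k < l")
    case False thus ?thesis by (simp add: tprod_sb)
  next
    case True
    have re: "(\<Sum>s<l. \<Sum>m'<p. A i m' (sb l (sb l k t) s) * B m' m s) =
              (\<Sum>s<l. \<Sum>m'<p. A i m' (sb l k s) * B m' m (sb l s t))" if t: "t < l" for t m
    proof -
      have "(\<Sum>s<l. \<Sum>m'<p. A i m' (sb l k s) * B m' m (sb l s t)) =
            (\<Sum>s<l. \<Sum>m'<p. A i m' (sb l k ((s + t) mod l)) * B m' m (sb l ((s + t) mod l) t))"
        by (rule sum_reindex_mod[OF l t, symmetric])
      also have "\<dots> = (\<Sum>s<l. \<Sum>m'<p. A i m' (sb l (sb l k t) s) * B m' m s)"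
        by (rule sum.cong[OF refl], rule sum.cong[OF refl]) (simp add: sb_sb[OF l t] sb_shift[OF l t])
      finally show ?thesis by simp
    qed
    have "tprod q l (tprod p l A B) C i j k = (\<Sum>t<l. \<Sum>m<q. (\<Sum>s<l. \<Sum>m'<p. A i m' (sb l (sb l k t) s) * B m' m s) * C m j t)"
      using True by (simp add: tprod_sb sb_lt[OF l])
    also have "\<dots> = (\<Sum>t<l. \<Sum>m<q. (\<Sum>s<l. \<Sum>m'<p. A i m' (sb l k s) * B m' m (sb l s t)) * C m j t)"
      by (rule sum.cong[OF refl], rule sum.cong[OF refl]) (simp add: re)
    also have "\<dots> = (\<Sum>t<l. \<Sum>m<q. \<Sum>s<l. \<Sum>m'<p. A i m' (sb l k s) * B m' m (sb l s t) * C m j t)"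
      by (simp add: sum_distrib_right)
    also have "\<dots> = (\<Sum>s<l. \<Sum>m'<p. \<Sum>t<l. \<Sum>m<q. A i m' (sb l k s) * B m' m (sb l s t) * C m j t)"
      by (rule swap4)
    also have "\<dots> = tprod p l A (tprod q l B C) i j k"
      using True by (simp add: tprod_sb sum_distrib_left mult.assoc)
    finally show ?thesis .
  qed
qed

lemma pull3: "(\<Sum>a\<in>A. \<Sum>b\<in>B. \<Sum>c\<in>C. f a b c) = (\<Sum>c\<in>C. \<Sum>a\<in>A. \<Sum>b\<in>B. (f a b c :: 'z::comm_monoid_add))"
proof -
  have "(\<Sum>a\<in>A. \<Sum>b\<in>B. \<Sum>c\<in>C. f a b c) = (\<Sum>a\<in>A. \<Sum>c\<in>C. \<Sum>b\<in>B. f a b c)"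
    by (rule sum.cong[OF refl], rule sum.swap)
  also have "\<dots> = (\<Sum>c\<in>C. \<Sum>a\<in>A. \<Sum>b\<in>B. f a b c)" by (rule sum.swap)
  finally show ?thesis .
qed

lemma pull4: "(\<Sum>a\<in>A. \<Sum>b\<in>B. \<Sum>c\<in>C. \<Sum>d\<in>D. f a b c d) = (\<Sum>d\<in>D. \<Sum>a\<in>A. \<Sum>b\<in>B. \<Sum>c\<in>C. (f a b c d :: 'z::comm_monoid_add))"
proof -
  have "(\<Sum>a\<in>A. \<Sum>b\<in>B. \<Sum>c\<in>C. \<Sum>d\<in>D. f a b c d) = (\<Sum>a\<in>A. \<Sum>d\<in>D. \<Sum>b\<in>B. \<Sum>c\<in>C. f a b c d)"
    by (rule sum.cong[OF refl], rule pull3)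
  also have "\<dots> = (\<Sum>d\<in>D. \<Sum>a\<in>A. \<Sum>b\<in>B. \<Sum>c\<in>C. f a b c d)" by (rule sum.swap)
  finally show ?thesis .
qed

lemma pull5: "(\<Sum>a\<in>A. \<Sum>b\<in>B. \<Sum>c\<in>C. \<Sum>d\<in>D. \<Sum>e\<in>E. f a b c d e) = (\<Sum>e\<in>E. \<Sum>a\<in>A. \<Sum>b\<in>B. \<Sum>c\<in>C. \<Sum>d\<in>D. (f a b c d e :: 'z::comm_monoid_add))"
proof -
  have "(\<Sum>a\<in>A. \<Sum>b\<in>B. \<Sum>c\<in>C. \<Sum>d\<in>D. \<Sum>e\<in>E. f a b c d e) = (\<Sum>a\<in>A. \<Sum>e\<in>E. \<Sum>b\<in>B. \<Sum>c\<in>C. \<Sum>d\<in>D. f a b c d e)"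
    by (rule sum.cong[OF refl], rule pull4)
  also have "\<dots> = (\<Sum>e\<in>E. \<Sum>a\<in>A. \<Sum>b\<in>B. \<Sum>c\<in>C. \<Sum>d\<in>D. f a b c d e)" by (rule sum.swap)
  finally show ?thesis .
qed

lemma tprod_trans:
  assumes l: "0 < l"
  shows "ttrans l (tprod p l A B) = tprod p l (ttrans l B) (ttrans l A)"
proof (intro ext)
  fix i j k
  show "ttrans l (tprod p l A B) i j k = tprod p l (ttrans l B) (ttrans l A) i j k"
  proof (cases "k < l")
    case False thus ?thesis by (simp add: tprod_sb ttrans_sb)
  next
    case k: True
    have "tprod p l (ttrans l B) (ttrans l A) i j k = (\<Sum>t<l. \<Sum>m<p. B m i (sb l 0 (sb l k t)) * A j m (sb l 0 t))"
      using k by (simp add: tprod_sb ttrans_sb sb_lt[OF l])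
    also have "\<dots> = (\<Sum>t<l. \<Sum>m<p. B m i (sb l 0 (sb l k (sb l k t))) * A j m (sb l 0 (sb l k t)))"
      by (rule sum_reindex_sb[OF l k, symmetric])
    also have "\<dots> = (\<Sum>t<l. \<Sum>m<p. B m i (sb l 0 t) * A j m (sb l 0 (sb l k t)))"
      by (rule sum.cong[OF refl]) (simp add: sb_inv[OF l _ k])
    also have "\<dots> = (\<Sum>t<l. \<Sum>m<p. B m i (sb l 0 (sb l 0 t)) * A j m (sb l 0 (sb l k (sb l 0 t))))"
      by (rule sum_reindex_sb[OF l l, symmetric])
    also have "\<dots> = (\<Sum>t<l. \<Sum>m<p. B m i t * A j m (sb l (sb l 0 k) t))"
    proof (rule sum.cong[OF refl], rule sum.cong[OF refl])
      fix t m assume t: "t \<in> {..<l}"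
      have "sb l 0 (sb l k (sb l 0 t)) = sb l (sb l 0 t) k" by (rule sb_0_sb[OF l k sb_lt[OF l]])
      also have "\<dots> = sb l 0 ((k + t) mod l)" using sb_sb[OF l, of t k 0] t k by simp
      also have "\<dots> = sb l (sb l 0 k) t" using sb_sb[OF l, of k t 0] t k by (simp add: add.commute)
      finally show "B m i (sb l 0 (sb l 0 t)) * A j m (sb l 0 (sb l k (sb l 0 t))) = B m i t * A j m (sb l (sb l 0 k) t)"
        using t sb_inv[OF l _ l, of t] by simp
    qed
    also have "\<dots> = ttrans l (tprod p l A B) i j k"
      using k by (simp add: tprod_sb ttrans_sb sb_lt[OF l] mult.commute)
    finally show ?thesis by simp
  qed
qed

lemma ttrans_ttrans:
  assumes l: "0 < l" and A: "is_tensor n p l A"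
  shows "ttrans l (ttrans l A) = A"
proof (intro ext)
  fix i j k
  show "ttrans l (ttrans l A) i j k = A i j k"
  proof (cases "k < l")
    case True thus ?thesis by (simp add: ttrans_sb sb_lt[OF l] sb_inv[OF l _ l])
  next
    case False thus ?thesis using A by (simp add: ttrans_sb is_tensor_def)
  qed
qed

lemma is_tensor_tprod:
  assumes "is_tensor n p l A" "is_tensor p q l B"
  shows "is_tensor n q l (tprod p l A B)"
  using assms unfolding is_tensor_def tprod_sb by auto

lemma is_tensor_ttrans:
  assumes "is_tensor n p l A"
  shows "is_tensor p n l (ttrans l A)"
  using assms unfolding is_tensor_def ttrans_sb by auto

lemma is_tensor_tid: "0 < l \<Longrightarrow> is_tensor p p l (tid p)"
  unfolding is_tensor_def tid_def by auto

lemma sum_delta_lt: "(\<Sum>m<(p::nat). (if m = j then f m else 0)) = (if j < p then f j else (0::real))"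
proof -
  have "(\<Sum>m\<in>{..<p}. if m = j then f m else 0) = (if j \<in> {..<p} then f j else 0)" by (rule sum.delta) simp
  thus ?thesis by simp
qed

lemma tid_left:
  assumes l: "0 < l" and B: "is_tensor p q l B"
  shows "tprod p l (tid p) B = B"
proof (intro ext)
  fix i j k
  show "tprod p l (tid p) B i j k = B i j k"
  proof (cases "k < l")
    case k: True
    have e: "tid p i m (sb l k t) * B m j t = (if t = k then (if m = i then (if i < p then B i j k else 0) else 0) else 0)"
      if "t < l" for t m
      using sb_eq0_iff[OF l k that] by (auto simp: tid_def)
    have "tprod p l (tid p) B i j k = (\<Sum>t<l. \<Sum>m<p. tid p i m (sb l k t) * B m j t)"
      using k by (simp add: tprod_sb)
    also have "\<dots> = (\<Sum>t<l. (if t = k then (\<Sum>m<p. (if m = i then (if i < p then B i j k else 0) else 0)) else 0))"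
      by (rule sum.cong[OF refl]) (simp add: e)
    also have "\<dots> = (if i < p then B i j k else 0)"
      using k by (simp add: sum_delta_lt)
    also have "\<dots> = B i j k" using B by (auto simp: is_tensor_def)
    finally show ?thesis .
  next
    case False thus ?thesis using B by (simp add: tprod_sb is_tensor_def)
  qed
qed

lemma tid_right:
  assumes l: "0 < l" and A: "is_tensor n p l A"
  shows "tprod p l A (tid p) = A"
proof (intro ext)
  fix i j k
  show "tprod p l A (tid p) i j k = A i j k"
  proof (cases "k < l")
    case k: True
    have e: "A i m (sb l k t) * tid p m j t = (if t = 0 then (if m = j then (if j < p then A i j k else 0) else 0) else 0)"
      for t m
      using sb_zero[OF l k] by (auto simp: tid_def)
    have "tprod p l A (tid p) i j k = (\<Sum>t<l. \<Sum>m<p. A i m (sb l k t) * tid p m j t)"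
      using k by (simp add: tprod_sb)
    also have "\<dots> = (\<Sum>t<l. (if t = 0 then (\<Sum>m<p. (if m = j then (if j < p then A i j k else 0) else 0)) else 0))"
      by (rule sum.cong[OF refl]) (simp add: e)
    also have "\<dots> = (if j < p then A i j k else 0)"
      using l by (simp add: sum_delta_lt)
    also have "\<dots> = A i j k" using A by (auto simp: is_tensor_def)
    finally show ?thesis .
  next
    case False thus ?thesis using A by (simp add: tprod_sb is_tensor_def)
  qed
qed

lemma ttrans_tid: "0 < l \<Longrightarrow> ttrans l (tid p) = tid p"
  by (intro ext) (auto simp: ttrans_sb tid_def sb_eq0_iff)

lemma ttrans_sb_in: "0 < l \<Longrightarrow> t < l \<Longrightarrow> s < l \<Longrightarrow> ttrans l A m i (sb l t s) = A i m (sb l s t)"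
  by (simp add: ttrans_sb sb_lt sb_0_sb)

lemma tinner_adj:
  assumes l: "0 < l"
  shows "tinner n q l X (tprod p l A Y) = tinner p q l (tprod n l (ttrans l A) X) Y"
proof -
  have "tinner n q l X (tprod p l A Y) = (\<Sum>i<n. \<Sum>j<q. \<Sum>s<l. \<Sum>t<l. \<Sum>m<p. X i j s * A i m (sb l s t) * Y m j t)"
    by (simp add: tinner_def tprod_sb sum_distrib_left mult.assoc)
  also have "\<dots> = (\<Sum>m<p. \<Sum>i<n. \<Sum>j<q. \<Sum>s<l. \<Sum>t<l. X i j s * A i m (sb l s t) * Y m j t)"
    by (rule pull5)
  also have "\<dots> = (\<Sum>m<p. \<Sum>j<q. \<Sum>s<l. \<Sum>t<l. \<Sum>i<n. X i j s * A i m (sb l s t) * Y m j t)"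
    by (rule sum.cong[OF refl], rule pull4[symmetric])
  also have "\<dots> = (\<Sum>m<p. \<Sum>j<q. \<Sum>t<l. \<Sum>s<l. \<Sum>i<n. X i j s * A i m (sb l s t) * Y m j t)"
    by (rule sum.cong[OF refl], rule sum.cong[OF refl], rule sum.swap)
  also have "\<dots> = (\<Sum>m<p. \<Sum>j<q. \<Sum>t<l. (\<Sum>s<l. \<Sum>i<n. ttrans l A m i (sb l t s) * X i j s) * Y m j t)"
  proof (rule sum.cong[OF refl], rule sum.cong[OF refl], rule sum.cong[OF refl])
    fix m j t assume t: "t \<in> {..<l}"
    have "(\<Sum>s<l. \<Sum>i<n. X i j s * A i m (sb l s t) * Y m j t) = (\<Sum>s<l. \<Sum>i<n. ttrans l A m i (sb l t s) * X i j s * Y m j t)"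
      by (rule sum.cong[OF refl], rule sum.cong[OF refl]) (use t in \<open>simp add: ttrans_sb_in[OF l] mult.commute\<close>)
    also have "\<dots> = (\<Sum>s<l. \<Sum>i<n. ttrans l A m i (sb l t s) * X i j s) * Y m j t"
      by (simp add: sum_distrib_right)
    finally show "(\<Sum>s<l. \<Sum>i<n. X i j s * A i m (sb l s t) * Y m j t) = (\<Sum>s<l. \<Sum>i<n. ttrans l A m i (sb l t s) * X i j s) * Y m j t" .
  qed
  also have "\<dots> = tinner p q l (tprod n l (ttrans l A) X) Y"
    unfolding tinner_def tprod_sb by simp
  finally show ?thesis .
qed

lemma tinner_comm: "tinner n p l X Y = tinner n p l Y X"
  unfolding tinner_def by (simp add: mult.commute)

lemma tinner_ttrans:
  assumes l: "0 < l"
  shows "tinner p n l (ttrans l X) (ttrans l Y) = tinner n p l X Y"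
proof -
  have "tinner p n l (ttrans l X) (ttrans l Y) = (\<Sum>i<p. \<Sum>j<n. \<Sum>k<l. X j i (sb l 0 k) * Y j i (sb l 0 k))"
    unfolding tinner_def by (simp add: ttrans_sb)
  also have "\<dots> = (\<Sum>i<p. \<Sum>j<n. \<Sum>k<l. X j i k * Y j i k)"
    by (rule sum.cong[OF refl], rule sum.cong[OF refl], rule sum_reindex_sb[OF l l])
  also have "\<dots> = tinner n p l X Y" unfolding tinner_def by (rule sum.swap)
  finally show ?thesis .
qed


definition tsub :: "tensor \<Rightarrow> tensor \<Rightarrow> tensor" where "tsub A B = (\<lambda>i j k. A i j k - B i j k)"
definition tadd :: "tensor \<Rightarrow> tensor \<Rightarrow> tensor" where "tadd A B = (\<lambda>i j k. A i j k + B i j k)"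
definition tsc :: "real \<Rightarrow> tensor \<Rightarrow> tensor" where "tsc c A = (\<lambda>i j k. c * A i j k)"
definition tcol :: "nat \<Rightarrow> tensor \<Rightarrow> tensor" where "tcol j Z = (\<lambda>i j' k. if j' = 0 then Z i j k else 0)"

lemma tprod_tsub_left: "tprod p l (tsub A B) C = tsub (tprod p l A C) (tprod p l B C)"
  by (intro ext) (simp add: tprod_def tsub_def left_diff_distrib sum_subtractf)
lemma tprod_tsub_right: "tprod p l A (tsub B C) = tsub (tprod p l A B) (tprod p l A C)"
  by (intro ext) (simp add: tprod_def tsub_def right_diff_distrib sum_subtractf)
lemma tprod_tadd_left: "tprod p l (tadd A B) C = tadd (tprod p l A C) (tprod p l B C)"
  by (intro ext) (simp add: tprod_def tadd_def distrib_right sum.distrib)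
lemma tprod_tadd_right: "tprod p l A (tadd B C) = tadd (tprod p l A B) (tprod p l A C)"
  by (intro ext) (simp add: tprod_def tadd_def distrib_left sum.distrib)
lemma tprod_tsc_left: "tprod p l (tsc c A) B = tsc c (tprod p l A B)"
  by (intro ext) (simp add: tprod_def tsc_def sum_distrib_left mult.assoc)
lemma tprod_tsc_right: "tprod p l A (tsc c B) = tsc c (tprod p l A B)"
  by (intro ext) (simp add: tprod_def tsc_def sum_distrib_left mult.left_commute)
lemma ttrans_tsub: "ttrans l (tsub A B) = tsub (ttrans l A) (ttrans l B)"
  by (intro ext) (simp add: ttrans_def tsub_def)
lemma ttrans_tadd: "ttrans l (tadd A B) = tadd (ttrans l A) (ttrans l B)"
  by (intro ext) (simp add: ttrans_def tadd_def)
lemma ttrans_tsc: "ttrans l (tsc c A) = tsc c (ttrans l A)"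
  by (intro ext) (simp add: ttrans_def tsc_def)

lemma tinner_tadd_right: "tinner n p l X (tadd Y Z) = tinner n p l X Y + tinner n p l X Z"
  by (simp add: tinner_def tadd_def distrib_left sum.distrib)
lemma tinner_tadd_left: "tinner n p l (tadd Y Z) X = tinner n p l Y X + tinner n p l Z X"
  by (simp add: tinner_def tadd_def distrib_right sum.distrib)
lemma tinner_tsub_right: "tinner n p l X (tsub Y Z) = tinner n p l X Y - tinner n p l X Z"
  by (simp add: tinner_def tsub_def right_diff_distrib sum_subtractf)
lemma tinner_tsub_left: "tinner n p l (tsub Y Z) X = tinner n p l Y X - tinner n p l Z X"
  by (simp add: tinner_def tsub_def left_diff_distrib sum_subtractf)
lemma tinner_tsc_right: "tinner n p l X (tsc c Y) = c * tinner n p l X Y"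
  by (simp add: tinner_def tsc_def sum_distrib_left mult.left_commute)
lemma tinner_tsc_left: "tinner n p l (tsc c Y) X = c * tinner n p l Y X"
  by (simp add: tinner_def tsc_def sum_distrib_left mult.assoc)

lemma is_tensor_tsub: "is_tensor n p l A \<Longrightarrow> is_tensor n p l B \<Longrightarrow> is_tensor n p l (tsub A B)"
  by (simp add: is_tensor_def tsub_def)
lemma is_tensor_tadd: "is_tensor n p l A \<Longrightarrow> is_tensor n p l B \<Longrightarrow> is_tensor n p l (tadd A B)"
  by (simp add: is_tensor_def tadd_def)
lemma is_tensor_tsc: "is_tensor n p l A \<Longrightarrow> is_tensor n p l (tsc c A)"
  by (simp add: is_tensor_def tsc_def)
lemma is_tensor_zero: "is_tensor n p l (\<lambda>_ _ _. 0)"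
  by (simp add: is_tensor_def)

lemma tinner_self_nonneg: "0 \<le> tinner n p l X X"
  unfolding tinner_def by (intro sum_nonneg) simp

lemma tinner_self_zero:
  assumes X: "is_tensor n p l X" and z: "tinner n p l X X = 0"
  shows "X = (\<lambda>_ _ _. 0)"
proof (intro ext)
  fix i j k
  show "X i j k = 0"
  proof (cases "i < n \<and> j < p \<and> k < l")
    case True
    have "(\<Sum>i<n. \<Sum>j<p. \<Sum>k<l. X i j k * X i j k) = 0" using z by (simp add: tinner_def)
    hence "\<forall>i\<in>{..<n}. (\<Sum>j<p. \<Sum>k<l. X i j k * X i j k) = 0"
      by (subst (asm) sum_nonneg_eq_0_iff) (auto intro!: sum_nonneg)
    hence "\<forall>i\<in>{..<n}. \<forall>j\<in>{..<p}. (\<Sum>k<l. X i j k * X i j k) = 0"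
      by (subst (asm) sum_nonneg_eq_0_iff) (auto intro!: sum_nonneg simp: sum_nonneg_eq_0_iff)
    hence "\<forall>i\<in>{..<n}. \<forall>j\<in>{..<p}. \<forall>k\<in>{..<l}. X i j k * X i j k = 0"
      by (simp add: sum_nonneg_eq_0_iff)
    thus ?thesis using True by auto
  next
    case False thus ?thesis using X by (auto simp: is_tensor_def)
  qed
qed

lemma quad_zero:
  fixes b c :: real
  assumes h: "\<And>s. 0 \<le> 2 * s * b + s^2 * c" and b: "0 \<le> b"
  shows "b = 0"
proof (rule ccontr)
  assume "b \<noteq> 0" hence bp: "b > 0" using b by simp
  define d where "d = \<bar>c\<bar> + 1"
  have d: "d > 0" "\<bar>c\<bar> \<le> d" unfolding d_def by auto
  define s where "s = - b / d"
  have e1: "2 * s * b = - 2 * (b^2 / d)" unfolding s_def by (simp add: power2_eq_square)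
  have "s^2 * c \<le> s^2 * \<bar>c\<bar>" by (intro mult_left_mono) auto
  also have "\<dots> \<le> s^2 * d" using d by (intro mult_left_mono) auto
  also have "\<dots> = b^2 / d" unfolding s_def using d by (simp add: power2_eq_square field_simps)
  finally have e2: "s^2 * c \<le> b^2 / d" .
  have "b^2 / d > 0" using bp d by simp
  hence "2 * s * b + s^2 * c < 0" using e1 e2 by linarith
  thus False using h[of s] by simp
qed

lemma quad_cs:
  fixes a b c :: real
  assumes h: "\<And>s. 0 \<le> a + 2 * s * b + s^2 * c" and c: "0 \<le> c"
  shows "b^2 \<le> a * c"
proof (cases "c = 0")
  case True
  have "b = 0"
  proof (rule ccontr)
    assume b0: "b \<noteq> 0"
    have "a + 2 * (- (a + 1) / (2 * b)) * b + (- (a + 1) / (2 * b))^2 * c = -1"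
      using True b0 by (simp add: field_simps)
    thus False using h[of "- (a + 1) / (2 * b)"] by simp
  qed
  thus ?thesis using True by simp
next
  case False
  hence cp: "c > 0" using c by simp
  have "0 \<le> a + 2 * (- b / c) * b + (- b / c)^2 * c" by (rule h)
  also have "\<dots> = a - b^2 / c" using cp by (simp add: power2_eq_square field_simps)
  finally have "b^2 / c \<le> a" by simp
  thus ?thesis using cp by (simp add: field_simps)
qed


lemma tcol_is: "is_tensor p q l Z \<Longrightarrow> is_tensor p 1 l (tcol j Z)"
  by (simp add: is_tensor_def tcol_def)

lemma tprod_tcol: "tprod p l H (tcol j Z) = tcol j (tprod p l H Z)"
  by (intro ext) (simp add: tprod_def tcol_def)

lemma tinner_tcol: "tinner p q l Z W = (\<Sum>j<q. tinner p 1 l (tcol j Z) (tcol j W))"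
proof -
  have "tinner p q l Z W = (\<Sum>j<q. \<Sum>i<p. \<Sum>k<l. Z i j k * W i j k)"
    unfolding tinner_def by (rule sum.swap)
  also have "\<dots> = (\<Sum>j<q. tinner p 1 l (tcol j Z) (tcol j W))"
    by (simp add: tinner_def tcol_def)
  finally show ?thesis .
qed

lemma psd_gen:
  assumes H: "t_psd p l H" and Z: "is_tensor p q l Z"
  shows "0 \<le> tinner p q l Z (tprod p l H Z)"
proof -
  have "tinner p q l Z (tprod p l H Z) = (\<Sum>j<q. tinner p 1 l (tcol j Z) (tprod p l H (tcol j Z)))"
    by (simp add: tinner_tcol[of p q l Z] tprod_tcol)
  also have "\<dots> \<ge> 0"
    using H tcol_is[OF Z] by (intro sum_nonneg) (auto simp: t_psd_def)
  finally show ?thesis .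
qed

lemma sym_form:
  assumes l: "0 < l" and H: "tsym p l H"
  shows "tinner p q l X (tprod p l H Y) = tinner p q l (tprod p l H X) Y"
  using tinner_adj[OF l, of p q X p H Y] H by (simp add: tsym_def)

lemma psd_zero:
  assumes l: "0 < l" and H: "t_psd p l H" and Z: "is_tensor p q l Z"
    and z: "tinner p q l Z (tprod p l H Z) = 0"
  shows "tprod p l H Z = (\<lambda>_ _ _. 0)"
proof -
  define W where "W = tprod p l H Z"
  have Hs: "tsym p l H" using H by (simp add: t_psd_def)
  have Ht: "is_tensor p p l H" using Hs by (simp add: tsym_def)
  have W: "is_tensor p q l W" unfolding W_def by (rule is_tensor_tprod[OF Ht Z])
  have key: "0 \<le> 2 * s * tinner p q l W W + s^2 * tinner p q l W (tprod p l H W)" for s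
  proof -
    have "0 \<le> tinner p q l (tadd Z (tsc s W)) (tprod p l H (tadd Z (tsc s W)))"
      by (rule psd_gen[OF H is_tensor_tadd[OF Z is_tensor_tsc[OF W]]])
    also have "\<dots> = tinner p q l Z (tprod p l H Z) + s * tinner p q l Z (tprod p l H W)
        + s * tinner p q l W (tprod p l H Z) + s * s * tinner p q l W (tprod p l H W)"
      by (simp add: tprod_tadd_right tprod_tsc_right tinner_tadd_left tinner_tadd_right
          tinner_tsc_left tinner_tsc_right algebra_simps)
    also have "tinner p q l Z (tprod p l H W) = tinner p q l W W"
      using sym_form[OF l Hs, of q Z W] by (simp add: W_def tinner_comm)
    also have "tinner p q l W (tprod p l H Z) = tinner p q l W W"
      by (simp add: W_def)
    finally show ?thesis using z by (simp add: power2_eq_square algebra_simps)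
  qed
  have "tinner p q l W W = 0"
    by (rule quad_zero[OF key tinner_self_nonneg])
  thus ?thesis using tinner_self_zero[OF W] by (simp add: W_def)
qed

lemma gram_form:
  assumes l: "0 < l" and A: "is_tensor n p l A"
  shows "tinner p q l Z (tprod p l (tprod n l (ttrans l A) A) Z) = tinner n q l (tprod p l A Z) (tprod p l A Z)"
proof -
  have "tprod p l (tprod n l (ttrans l A) A) Z = tprod n l (ttrans l A) (tprod p l A Z)"
    by (rule tprod_assoc[OF l])
  hence "tinner p q l Z (tprod p l (tprod n l (ttrans l A) A) Z) = tinner n q l (tprod p l (ttrans l (ttrans l A)) Z) (tprod p l A Z)"
    using tinner_adj[OF l, of p q Z n "ttrans l A" "tprod p l A Z"] by simp
  thus ?thesis using ttrans_ttrans[OF l A] by simp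
qed

lemma gram_sym:
  assumes l: "0 < l" and A: "is_tensor n p l A"
  shows "tsym p l (tprod n l (ttrans l A) A)"
  unfolding tsym_def
  using is_tensor_tprod[OF is_tensor_ttrans[OF A] A] tprod_trans[OF l, of n "ttrans l A" A] ttrans_ttrans[OF l A]
  by simp

lemma gram_psd:
  assumes l: "0 < l" and A: "is_tensor n p l A"
  shows "t_psd p l (tprod n l (ttrans l A) A)"
  unfolding t_psd_def using gram_sym[OF l A] gram_form[OF l A, of 1] tinner_self_nonneg by simp

lemma sqrt_unique:
  assumes l: "0 < l" and H1: "t_psd p l H1" and H2: "t_psd p l H2"
    and eq: "tprod p l H1 H1 = tprod p l H2 H2"
  shows "H1 = H2"
proof -
  have S1: "tsym p l H1" and S2: "tsym p l H2" using H1 H2 by (auto simp: t_psd_def)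
  have T1: "is_tensor p p l H1" and T2: "is_tensor p p l H2" using S1 S2 by (auto simp: tsym_def)
  define D where "D = tsub H1 H2"
  have D: "is_tensor p p l D" unfolding D_def by (rule is_tensor_tsub[OF T1 T2])
  have Dt: "ttrans l D = D" using S1 S2 by (simp add: D_def ttrans_tsub tsym_def)
  have e1: "tprod p l H1 D = tsub (tprod p l H1 H1) (tprod p l H1 H2)" by (simp add: D_def tprod_tsub_right)
  have e2: "tprod p l D H2 = tsub (tprod p l H1 H2) (tprod p l H2 H2)" by (simp add: D_def tprod_tsub_left)
  have e3: "tinner p p l D (tprod p l D H2) = tinner p p l D (tprod p l H2 D)"
  proof -
    have "tinner p p l D (tprod p l D H2) = tinner p p l (ttrans l D) (ttrans l (tprod p l D H2))"
      by (rule tinner_ttrans[OF l, symmetric])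
    also have "\<dots> = tinner p p l D (tprod p l H2 D)"
      using S2 Dt by (simp add: tprod_trans[OF l] tsym_def)
    finally show ?thesis .
  qed
  have sum0: "tinner p p l D (tprod p l H1 D) + tinner p p l D (tprod p l H2 D) = 0"
    using e1 e2 e3[symmetric] eq by (simp add: tinner_tsub_right)
  have n1: "0 \<le> tinner p p l D (tprod p l H1 D)" by (rule psd_gen[OF H1 D])
  have n2: "0 \<le> tinner p p l D (tprod p l H2 D)" by (rule psd_gen[OF H2 D])
  have z1: "tprod p l H1 D = (\<lambda>_ _ _. 0)" using psd_zero[OF l H1 D] sum0 n1 n2 by simp
  have z2: "tprod p l H2 D = (\<lambda>_ _ _. 0)" using psd_zero[OF l H2 D] sum0 n1 n2 by simp
  have DD: "tprod p l D D = (\<lambda>_ _ _. 0)"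
  proof -
    have "tprod p l D D = tsub (tprod p l H1 D) (tprod p l H2 D)"
      unfolding D_def by (rule tprod_tsub_left)
    thus ?thesis using z1 z2 by (simp add: tsub_def)
  qed
  have "tinner p p l D D = tinner p p l D (tprod p l D (tid p))" using tid_right[OF l D] by simp
  also have "\<dots> = tinner p p l (tprod p l (ttrans l D) D) (tid p)" by (rule tinner_adj[OF l])
  also have "\<dots> = 0" using Dt DD by (simp add: tinner_def)
  finally have dz: "D = (\<lambda>_ _ _. 0)" by (rule tinner_self_zero[OF D])
  have "H1 i j k = H2 i j k" for i j k
  proof -
    have "D i j k = 0" using dz by simp
    thus ?thesis by (simp add: D_def tsub_def)
  qed
  thus ?thesis by (intro ext)
qed


fun cc :: "nat \<Rightarrow> real" where
  "cc 0 = 0" | "cc (Suc 0) = 1/2" | "cc (Suc (Suc n)) = (\<Sum>i\<in>{1..Suc n}. cc i * cc (Suc (Suc n) - i)) / 2"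

lemma cc_nonneg: "0 \<le> cc n"
proof (induction n rule: less_induct)
  case (less n)
  show ?case
  proof (cases n)
    case 0 thus ?thesis by simp
  next
    case (Suc m)
    show ?thesis
    proof (cases m)
      case 0 thus ?thesis using Suc by simp
    next
      case (Suc r)
      have "0 \<le> (\<Sum>i\<in>{1..Suc r}. cc i * cc (Suc (Suc r) - i))"
        using less \<open>n = Suc m\<close> Suc by (intro sum_nonneg mult_nonneg_nonneg) auto
      thus ?thesis using \<open>n = Suc m\<close> Suc by simp
    qed
  qed
qed

lemma cc_conv: "(\<Sum>i\<le>n. cc i * cc (n - i)) = 2 * cc n - (if n = 1 then 1 else 0)"
proof (cases n)
  case 0 thus ?thesis by simp
next
  case (Suc m)
  show ?thesis
  proof (cases m)
    case 0 thus ?thesis using Suc by simp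
  next
    case (Suc r)
    have split: "{..Suc (Suc r)} = insert 0 (insert (Suc (Suc r)) {1..Suc r})" by auto
    have "(\<Sum>i\<le>Suc (Suc r). cc i * cc (Suc (Suc r) - i)) = (\<Sum>i\<in>{1..Suc r}. cc i * cc (Suc (Suc r) - i))"
      unfolding split by simp
    thus ?thesis using \<open>n = Suc m\<close> Suc by simp
  qed
qed

lemma cc_partial: "(\<Sum>n<N. cc n) \<le> 1"
proof (induction N rule: less_induct)
  case (less N)
  show ?case
  proof (cases "N \<le> 2")
    case True
    have "(\<Sum>n<N. cc n) \<le> (\<Sum>n<2. cc n)" using True by (intro sum_mono2) (auto simp: cc_nonneg)
    also have "\<dots> = 1/2" by (simp add: numeral_2_eq_2)
    finally show ?thesis by simp
  next
    case False
    define M where "M = N - 1"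
    have MN: "M < N" "N = Suc M" using False unfolding M_def by auto
    have IH: "(\<Sum>n<M. cc n) \<le> 1" using less MN by simp
    have A: "(\<Sum>n<N. 2 * cc n - (if n = 1 then 1 else 0)) = 2 * (\<Sum>n<N. cc n) - 1"
      using False by (simp add: sum_subtractf sum_distrib_left[symmetric] sum.delta')
    have "(\<Sum>n<N. 2 * cc n - (if n = 1 then 1 else 0)) = (\<Sum>n<N. \<Sum>i\<le>n. cc i * cc (n - i))"
      by (simp add: cc_conv)
    also have "\<dots> = (\<Sum>(i, j)\<in>{(i, j). i + j < N}. cc i * cc j)"
      by (rule sum.triangle_reindex[symmetric])
    also have "\<dots> = (\<Sum>(i, j)\<in>{(i, j). i + j < N \<and> i \<noteq> 0 \<and> j \<noteq> 0}. cc i * cc j)"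
    proof (rule sum.mono_neutral_right)
      show "finite {(i, j). i + j < N}"
        by (rule finite_subset[of _ "{..<N} \<times> {..<N}"]) auto
      show "{(i, j). i + j < N \<and> i \<noteq> 0 \<and> j \<noteq> 0} \<subseteq> {(i, j). i + j < N}" by auto
      show "\<forall>x\<in>{(i, j). i + j < N} - {(i, j). i + j < N \<and> i \<noteq> 0 \<and> j \<noteq> 0}. (case x of (i, j) \<Rightarrow> cc i * cc j) = 0"
        by (auto intro!: gr0I)
    qed
    also have "\<dots> \<le> (\<Sum>(i, j)\<in>{..<M} \<times> {..<M}. cc i * cc j)"
      by (rule sum_mono2) (auto simp: MN cc_nonneg)
    also have "\<dots> = (\<Sum>n<M. cc n) * (\<Sum>n<M. cc n)"
      by (simp add: sum_product sum.cartesian_product)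
    also have "\<dots> \<le> 1 * 1"
      using IH by (intro mult_mono) (auto intro: sum_nonneg simp: cc_nonneg)
    finally show ?thesis using A by simp
  qed
qed

lemma cc_summable: "summable cc"
  by (rule summableI_nonneg_bounded[OF cc_nonneg cc_partial])

lemma cc_suminf: "suminf cc \<le> 1"
  by (rule suminf_le_const[OF cc_summable cc_partial])


primrec tpw :: "nat \<Rightarrow> nat \<Rightarrow> tensor \<Rightarrow> nat \<Rightarrow> tensor" where
  "tpw p l T 0 = tid p" | "tpw p l T (Suc j) = tprod p l T (tpw p l T j)"

lemma tpw_is: "0 < l \<Longrightarrow> is_tensor p p l T \<Longrightarrow> is_tensor p p l (tpw p l T j)"
  by (induction j) (auto intro: is_tensor_tprod is_tensor_tid)

lemma tpw_add:
  assumes l: "0 < l" and T: "is_tensor p p l T"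
  shows "tpw p l T (i + j) = tprod p l (tpw p l T i) (tpw p l T j)"
proof (induction i)
  case 0 thus ?case using tid_left[OF l tpw_is[OF l T]] by simp
next
  case (Suc i) thus ?case by (simp add: tprod_assoc[OF l])
qed

lemma tpw_one: "0 < l \<Longrightarrow> is_tensor p p l T \<Longrightarrow> tpw p l T 1 = T"
  by (simp add: tid_right)

lemma tpw_sym:
  assumes l: "0 < l" and T: "tsym p l T"
  shows "ttrans l (tpw p l T j) = tpw p l T j"
proof (induction j)
  case 0 thus ?case by (simp add: ttrans_tid[OF l])
next
  case (Suc j)
  have Tt: "is_tensor p p l T" using T by (simp add: tsym_def)
  have "ttrans l (tpw p l T (Suc j)) = tprod p l (tpw p l T j) T"
    using Suc T by (simp add: tprod_trans[OF l] tsym_def)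
  also have "\<dots> = tpw p l T (j + 1)" using tpw_add[OF l Tt, of j 1] tpw_one[OF l Tt] by simp
  finally show ?case by simp
qed

definition contr :: "nat \<Rightarrow> nat \<Rightarrow> tensor \<Rightarrow> bool" where
  "contr p l T \<longleftrightarrow> tsym p l T \<and> (\<forall>Z. is_tensor p 1 l Z \<longrightarrow>
      0 \<le> tinner p 1 l Z (tprod p l T Z) \<and> tinner p 1 l Z (tprod p l T Z) \<le> tinner p 1 l Z Z)"

lemma eucl_cs: "(tinner n q l X Y)^2 \<le> tinner n q l X X * tinner n q l Y Y"
proof (rule quad_cs)
  fix s
  have "0 \<le> tinner n q l (tadd X (tsc s Y)) (tadd X (tsc s Y))" by (rule tinner_self_nonneg)
  also have "\<dots> = tinner n q l X X + 2 * s * tinner n q l X Y + s\<^sup>2 * tinner n q l Y Y"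
    by (simp add: tinner_tadd_left tinner_tadd_right tinner_tsc_left tinner_tsc_right
        tinner_comm[of n q l Y X] power2_eq_square algebra_simps)
  finally show "0 \<le> tinner n q l X X + 2 * s * tinner n q l X Y + s\<^sup>2 * tinner n q l Y Y" .
qed (rule tinner_self_nonneg)

lemma form_cs:
  assumes l: "0 < l" and T: "contr p l T" and X: "is_tensor p 1 l X" and Y: "is_tensor p 1 l Y"
  shows "(tinner p 1 l X (tprod p l T Y))^2 \<le> tinner p 1 l X (tprod p l T X) * tinner p 1 l Y (tprod p l T Y)"
proof (rule quad_cs)
  have Ts: "tsym p l T" using T by (simp add: contr_def)
  fix s
  have "0 \<le> tinner p 1 l (tadd X (tsc s Y)) (tprod p l T (tadd X (tsc s Y)))"
    using T is_tensor_tadd[OF X is_tensor_tsc[OF Y]] by (simp add: contr_def)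
  also have "\<dots> = tinner p 1 l X (tprod p l T X) + s * tinner p 1 l X (tprod p l T Y)
     + s * tinner p 1 l Y (tprod p l T X) + s * s * tinner p 1 l Y (tprod p l T Y)"
    by (simp add: tprod_tadd_right tprod_tsc_right tinner_tadd_left tinner_tadd_right
        tinner_tsc_left tinner_tsc_right algebra_simps)
  also have "tinner p 1 l Y (tprod p l T X) = tinner p 1 l X (tprod p l T Y)"
    using sym_form[OF l Ts, of 1 Y X] by (simp add: tinner_comm)
  finally show "0 \<le> tinner p 1 l X (tprod p l T X) + 2 * s * tinner p 1 l X (tprod p l T Y) + s\<^sup>2 * tinner p 1 l Y (tprod p l T Y)"
    by (simp add: power2_eq_square algebra_simps)
  show "0 \<le> tinner p 1 l Y (tprod p l T Y)" using T Y by (simp add: contr_def)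
qed

lemma contr_norm:
  assumes l: "0 < l" and T: "contr p l T" and Z: "is_tensor p 1 l Z"
  shows "tinner p 1 l (tprod p l T Z) (tprod p l T Z) \<le> tinner p 1 l Z Z"
proof -
  have Tt: "is_tensor p p l T" using T by (simp add: contr_def tsym_def)
  define W where "W = tprod p l T Z"
  have W: "is_tensor p 1 l W" unfolding W_def by (rule is_tensor_tprod[OF Tt Z])
  define w where "w = tinner p 1 l W W"
  have w0: "0 \<le> w" unfolding w_def by (rule tinner_self_nonneg)
  have "w^2 \<le> tinner p 1 l W (tprod p l T W) * tinner p 1 l Z (tprod p l T Z)"
    using form_cs[OF l T W Z] by (simp add: w_def W_def)
  also have "\<dots> \<le> w * tinner p 1 l Z Z"
    using T W Z unfolding contr_def w_def by (intro mult_mono) (auto intro: tinner_self_nonneg)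
  finally have "w * w \<le> w * tinner p 1 l Z Z" by (simp add: power2_eq_square)
  hence "w \<le> tinner p 1 l Z Z" using w0 tinner_self_nonneg[of p 1 l Z]
    by (cases "w = 0") (auto simp: mult_le_cancel_left)
  thus ?thesis by (simp add: w_def W_def)
qed

lemma contr_pow_norm:
  assumes l: "0 < l" and T: "contr p l T" and Z: "is_tensor p 1 l Z"
  shows "tinner p 1 l (tprod p l (tpw p l T j) Z) (tprod p l (tpw p l T j) Z) \<le> tinner p 1 l Z Z"
proof (induction j)
  case 0 thus ?case using tid_left[OF l Z] by simp
next
  case (Suc j)
  have Tt: "is_tensor p p l T" using T by (simp add: contr_def tsym_def)
  have W: "is_tensor p 1 l (tprod p l (tpw p l T j) Z)" by (rule is_tensor_tprod[OF tpw_is[OF l Tt] Z])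
  have "tprod p l (tpw p l T (Suc j)) Z = tprod p l T (tprod p l (tpw p l T j) Z)"
    by (simp add: tprod_assoc[OF l])
  thus ?case using contr_norm[OF l T W] Suc by simp
qed

lemma contr_pow_form:
  assumes l: "0 < l" and T: "contr p l T" and Z: "is_tensor p 1 l Z"
  shows "tinner p 1 l Z (tprod p l (tpw p l T j) Z) \<le> tinner p 1 l Z Z"
proof (rule power2_le_imp_le)
  have "(tinner p 1 l Z (tprod p l (tpw p l T j) Z))^2 \<le> tinner p 1 l Z Z * tinner p 1 l (tprod p l (tpw p l T j) Z) (tprod p l (tpw p l T j) Z)"
    by (rule eucl_cs)
  also have "\<dots> \<le> tinner p 1 l Z Z * tinner p 1 l Z Z"
    by (intro mult_left_mono contr_pow_norm[OF l T Z] tinner_self_nonneg)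
  finally show "(tinner p 1 l Z (tprod p l (tpw p l T j) Z))^2 \<le> (tinner p 1 l Z Z)^2" by (simp add: power2_eq_square)
qed (rule tinner_self_nonneg)

lemma single_le:
  assumes "i < n" "j < q" "k < l"
  shows "(X i j k)^2 \<le> tinner n q l X X"
proof -
  have "(X i j k)^2 \<le> (\<Sum>k<l. X i j k * X i j k)"
    using assms member_le_sum[of k "{..<l}" "\<lambda>k. X i j k * X i j k"] by (simp add: power2_eq_square)
  also have "\<dots> \<le> (\<Sum>j<q. \<Sum>k<l. X i j k * X i j k)"
    using assms member_le_sum[of j "{..<q}" "\<lambda>j. \<Sum>k<l. X i j k * X i j k"] by (simp add: sum_nonneg)
  also have "\<dots> \<le> (\<Sum>i<n. \<Sum>j<q. \<Sum>k<l. X i j k * X i j k)"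
    using assms member_le_sum[of i "{..<n}" "\<lambda>i. \<Sum>j<q. \<Sum>k<l. X i j k * X i j k"] by (simp add: sum_nonneg)
  finally show ?thesis by (simp add: tinner_def)
qed

lemma contr_pow_entry:
  assumes l: "0 < l" and T: "contr p l T"
  shows "\<bar>tpw p l T j a b k\<bar> \<le> 1"
proof -
  have Tt: "is_tensor p p l T" using T by (simp add: contr_def tsym_def)
  have P: "is_tensor p p l (tpw p l T j)" by (rule tpw_is[OF l Tt])
  show ?thesis
  proof (cases "a < p \<and> b < p \<and> k < l")
    case False thus ?thesis using P by (auto simp: is_tensor_def)
  next
    case True
    define e :: tensor where "e = (\<lambda>i j' t. if i = b \<and> j' = 0 \<and> t = 0 then 1 else 0)"
    have e: "is_tensor p 1 l e" using True l unfolding e_def is_tensor_def by auto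
    have inner: "(\<Sum>k<l. (if i = b \<and> k = 0 then 1 else 0::real)) = (if i = b then 1 else 0)" for i
      by (cases "i = b") (simp_all add: l)
    have ee: "tinner p 1 l e e = 1" using True unfolding e_def tinner_def
      by (simp add: inner sum_delta_lt if_distrib[of "\<lambda>x. x * _"] cong: if_cong)
    have "tprod p l (tpw p l T j) e a 0 k = (\<Sum>t<l. \<Sum>m<p. tpw p l T j a m (sb l k t) * e m 0 t)"
      using True by (simp add: tprod_sb)
    also have "\<dots> = (\<Sum>t<l. if t = 0 then tpw p l T j a b k else 0)"
    proof (rule sum.cong[OF refl])
      fix t assume t: "t \<in> {..<l}"
      show "(\<Sum>m<p. tpw p l T j a m (sb l k t) * e m 0 t) = (if t = 0 then tpw p l T j a b k else 0)"
      proof (cases "t = 0")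
        case True
        have "(\<lambda>m. tpw p l T j a m (sb l k t) * e m 0 t) = (\<lambda>m. if m = b then tpw p l T j a b k else 0)"
          using True \<open>a < p \<and> b < p \<and> k < l\<close> by (auto simp: e_def sb_zero[OF l])
        hence "(\<Sum>m<p. tpw p l T j a m (sb l k t) * e m 0 t) = (\<Sum>m<p. if m = b then tpw p l T j a b k else 0)"
          by (rule arg_cong)
        thus ?thesis using True \<open>a < p \<and> b < p \<and> k < l\<close> by (simp only: sum_delta_lt) simp
      qed (simp add: e_def)
    qed
    also have "\<dots> = tpw p l T j a b k" using l by simp
    finally have eq: "tprod p l (tpw p l T j) e a 0 k = tpw p l T j a b k" .
    have "(tpw p l T j a b k)^2 \<le> tinner p 1 l (tprod p l (tpw p l T j) e) (tprod p l (tpw p l T j) e)"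
      using single_le[of a p 0 1 k l "tprod p l (tpw p l T j) e"] True eq by simp
    also have "\<dots> \<le> 1" using contr_pow_norm[OF l T e, of j] ee by simp
    finally show ?thesis by (simp add: abs_square_le_1)
  qed
qed


lemma fin_suminf:
  assumes "finite I" "\<And>x. x \<in> I \<Longrightarrow> summable (F x)"
  shows "(\<Sum>x\<in>I. suminf (F x)) = (\<Sum>n. \<Sum>x\<in>I. F x n) \<and> summable (\<lambda>n. \<Sum>x\<in>I. (F x n :: real))"
proof
  have "(\<Sum>n. \<Sum>x\<in>I. F x n) = (\<Sum>x\<in>I. \<Sum>n. F x n)" by (rule suminf_sum) (rule assms(2))
  thus "(\<Sum>x\<in>I. suminf (F x)) = (\<Sum>n. \<Sum>x\<in>I. F x n)" by simp
  show "summable (\<lambda>n. \<Sum>x\<in>I. (F x n :: real))" by (rule summable_sum) (rule assms(2))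
qed

lemma tinner_suminf:
  assumes sm: "\<And>i j k. summable (\<lambda>n. F n i j k)"
  shows "tinner a b c Z (\<lambda>i j k. \<Sum>n. F n i j k) = (\<Sum>n. tinner a b c Z (F n))
     \<and> summable (\<lambda>n. tinner a b c Z (F n))"
proof -
  have s1: "summable (\<lambda>n. Z i j k * F n i j k)" for i j k by (rule summable_mult[OF sm])
  have s2: "summable (\<lambda>n. \<Sum>k<c. Z i j k * F n i j k)" for i j
    using fin_suminf[of "{..<c}" "\<lambda>k n. Z i j k * F n i j k"] s1 by simp
  have s3: "summable (\<lambda>n. \<Sum>j<b. \<Sum>k<c. Z i j k * F n i j k)" for i
    using fin_suminf[of "{..<b}" "\<lambda>j n. \<Sum>k<c. Z i j k * F n i j k"] s2 by simp
  have "tinner a b c Z (\<lambda>i j k. \<Sum>n. F n i j k) = (\<Sum>i<a. \<Sum>j<b. \<Sum>k<c. \<Sum>n. Z i j k * F n i j k)"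
    unfolding tinner_def by (simp add: suminf_mult[OF sm])
  also have "\<dots> = (\<Sum>i<a. \<Sum>j<b. \<Sum>n. \<Sum>k<c. Z i j k * F n i j k)"
    using fin_suminf[of "{..<c}"] s1 by simp
  also have "\<dots> = (\<Sum>i<a. \<Sum>n. \<Sum>j<b. \<Sum>k<c. Z i j k * F n i j k)"
    using fin_suminf[of "{..<b}"] s2 by simp
  also have "\<dots> = (\<Sum>n. \<Sum>i<a. \<Sum>j<b. \<Sum>k<c. Z i j k * F n i j k)"
    using fin_suminf[of "{..<a}"] s3 by simp
  finally show ?thesis
    using fin_suminf[of "{..<a}" "\<lambda>i n. \<Sum>j<b. \<Sum>k<c. Z i j k * F n i j k"] s3
    by (simp add: tinner_def)
qed

lemma tprod_suminf_left:
  assumes sm: "\<And>i j k. summable (\<lambda>n. F n i j k)"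
  shows "tprod p l (\<lambda>i j k. \<Sum>n. F n i j k) Z i j k = (\<Sum>n. tprod p l (F n) Z i j k)
     \<and> summable (\<lambda>n. tprod p l (F n) Z i j k)"
proof (cases "k < l")
  case False thus ?thesis by (simp add: tprod_sb)
next
  case True
  have s1: "summable (\<lambda>n. F n i m (sb l k t) * Z m j t)" for t m by (rule summable_mult2[OF sm])
  have s2: "summable (\<lambda>n. \<Sum>m<p. F n i m (sb l k t) * Z m j t)" for t
    using fin_suminf[of "{..<p}" "\<lambda>m n. F n i m (sb l k t) * Z m j t"] s1 by simp
  have "tprod p l (\<lambda>i j k. \<Sum>n. F n i j k) Z i j k = (\<Sum>t<l. \<Sum>m<p. \<Sum>n. F n i m (sb l k t) * Z m j t)"
    using True by (simp add: tprod_sb suminf_mult2[OF sm])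
  also have "\<dots> = (\<Sum>t<l. \<Sum>n. \<Sum>m<p. F n i m (sb l k t) * Z m j t)"
    using fin_suminf[of "{..<p}"] s1 by simp
  also have "\<dots> = (\<Sum>n. \<Sum>t<l. \<Sum>m<p. F n i m (sb l k t) * Z m j t)"
    using fin_suminf[of "{..<l}"] s2 by simp
  finally show ?thesis
    using fin_suminf[of "{..<l}" "\<lambda>t n. \<Sum>m<p. F n i m (sb l k t) * Z m j t"] s2 True
    by (simp add: tprod_sb)
qed

definition Ysr :: "nat \<Rightarrow> nat \<Rightarrow> tensor \<Rightarrow> tensor" where
  "Ysr p l T = (\<lambda>a b k. \<Sum>n. tsc (cc n) (tpw p l T n) a b k)"

context
  fixes p l :: nat and T :: tensor
  assumes l: "0 < l" and T: "contr p l T"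
begin

lemma Tt: "is_tensor p p l T" using T by (simp add: contr_def tsym_def)
lemma Tsym: "tsym p l T" using T by (simp add: contr_def)

lemma ser_abs_summable: "summable (\<lambda>n. norm (tsc (cc n) (tpw p l T n) a b k))"
proof (rule summable_comparison_test[OF _ cc_summable])
  show "\<exists>N. \<forall>n\<ge>N. norm (norm (tsc (cc n) (tpw p l T n) a b k)) \<le> cc n"
    using contr_pow_entry[OF l T] cc_nonneg
    by (auto simp: tsc_def abs_mult intro!: mult_left_le)
qed

lemma ser_summable: "summable (\<lambda>n. tsc (cc n) (tpw p l T n) a b k)"
  by (rule summable_norm_cancel[OF ser_abs_summable])

lemma Y_is: "is_tensor p p l (Ysr p l T)"
  using tpw_is[OF l Tt] unfolding is_tensor_def Ysr_def tsc_def by auto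

lemma Y_sym: "ttrans l (Ysr p l T) = Ysr p l T"
proof (intro ext)
  fix a b k
  show "ttrans l (Ysr p l T) a b k = Ysr p l T a b k"
  proof (cases "k < l")
    case True
    have "tpw p l T n b a (sb l 0 k) = tpw p l T n a b k" for n
      using fun_cong[OF fun_cong[OF fun_cong[OF tpw_sym[OF l Tsym, of n]]], of a b k] True
      by (simp add: ttrans_sb)
    thus ?thesis using True by (simp add: ttrans_sb Ysr_def tsc_def)
  next
    case False thus ?thesis using Y_is by (simp add: ttrans_sb is_tensor_def)
  qed
qed

lemma YY_entry:
  "tprod p l (Ysr p l T) (Ysr p l T) a b k = 2 * Ysr p l T a b k - T a b k"
proof (cases "k < l")
  case False
  thus ?thesis using Y_is Tt by (simp add: tprod_sb is_tensor_def)
next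
  case k: True
  define P where "P = tpw p l T"
  have PP: "tprod p l (P i) (P j) = P (i + j)" for i j
    unfolding P_def by (rule tpw_add[OF l Tt, symmetric])
  define h where "h t m n = (\<Sum>i\<le>n. (cc i * P i a m (sb l k t)) * (cc (n - i) * P (n - i) m b t))" for t m n
  have cp: "h t m sums (Ysr p l T a m (sb l k t) * Ysr p l T m b t)" for t m
    unfolding h_def Ysr_def P_def
    using Cauchy_product_sums[OF ser_abs_summable ser_abs_summable] by (simp add: tsc_def)
  have s1: "summable (h t m)" for t m using cp by (rule sums_summable)
  have s2: "summable (\<lambda>n. \<Sum>m<p. h t m n)" for t
    using fin_suminf[of "{..<p}" "h t"] s1 by simp
  have "tprod p l (Ysr p l T) (Ysr p l T) a b k = (\<Sum>t<l. \<Sum>m<p. \<Sum>n. h t m n)"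
    using k by (simp add: tprod_sb) (intro sum.cong refl, rule sums_unique[OF cp])
  also have "\<dots> = (\<Sum>t<l. \<Sum>n. \<Sum>m<p. h t m n)"
    using fin_suminf[of "{..<p}"] s1 by simp
  also have "\<dots> = (\<Sum>n. \<Sum>t<l. \<Sum>m<p. h t m n)"
    using fin_suminf[of "{..<l}"] s2 by simp
  also have "\<dots> = (\<Sum>n. (2 * cc n - (if n = 1 then 1 else 0)) * P n a b k)"
  proof (rule arg_cong[where f = suminf], rule ext)
    fix n
    have "(\<Sum>t<l. \<Sum>m<p. h t m n) = (\<Sum>i\<le>n. \<Sum>t<l. \<Sum>m<p. (cc i * P i a m (sb l k t)) * (cc (n - i) * P (n - i) m b t))"
      unfolding h_def by (rule pull3)
    also have "\<dots> = (\<Sum>i\<le>n. cc i * cc (n - i) * tprod p l (P i) (P (n - i)) a b k)"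
      using k by (simp add: tprod_sb sum_distrib_left ac_simps)
    also have "\<dots> = (\<Sum>i\<le>n. cc i * cc (n - i)) * P n a b k"
      by (simp add: PP sum_distrib_right)
    also have "\<dots> = (2 * cc n - (if n = 1 then 1 else 0)) * P n a b k"
      by (simp add: cc_conv)
    finally show "(\<Sum>t<l. \<Sum>m<p. h t m n) = (2 * cc n - (if n = 1 then 1 else 0)) * P n a b k" .
  qed
  also have "\<dots> = 2 * Ysr p l T a b k - T a b k"
  proof -
    have a1: "(\<lambda>n. cc n * P n a b k) sums Ysr p l T a b k"
      using ser_summable[of a b k] unfolding Ysr_def P_def by (simp add: tsc_def summable_sums)
    have a2: "(\<lambda>n. 2 * (cc n * P n a b k)) sums (2 * Ysr p l T a b k)"
      by (rule sums_mult[OF a1])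
    have a3: "(\<lambda>n. if n = 1 then P n a b k else 0) sums P 1 a b k" by (rule sums_single)
    have "(\<lambda>n. 2 * (cc n * P n a b k) - (if n = 1 then P n a b k else 0)) sums (2 * Ysr p l T a b k - P 1 a b k)"
      by (rule sums_diff[OF a2 a3])
    moreover have "(\<lambda>n. 2 * (cc n * P n a b k) - (if n = 1 then P n a b k else 0)) = (\<lambda>n. (2 * cc n - (if n = 1 then 1 else 0)) * P n a b k)"
      by (auto simp: algebra_simps)
    moreover have "P 1 = T" unfolding P_def by (rule tpw_one[OF l Tt])
    ultimately show ?thesis by (simp add: sums_unique[symmetric])
  qed
  finally show ?thesis .
qed

lemma H0_sq: "tprod p l (tsub (tid p) (Ysr p l T)) (tsub (tid p) (Ysr p l T)) = tsub (tid p) T"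
proof -
  have X: "is_tensor p p l (tsub (tid p) (Ysr p l T))" by (rule is_tensor_tsub[OF is_tensor_tid[OF l] Y_is])
  have a: "tprod p l (tid p) (tsub (tid p) (Ysr p l T)) = tsub (tid p) (Ysr p l T)" by (rule tid_left[OF l X])
  have b: "tprod p l (Ysr p l T) (tsub (tid p) (Ysr p l T)) = tsub (Ysr p l T) (tprod p l (Ysr p l T) (Ysr p l T))"
    by (simp add: tprod_tsub_right tid_right[OF l Y_is])
  have "tprod p l (tsub (tid p) (Ysr p l T)) (tsub (tid p) (Ysr p l T))
      = tsub (tsub (tid p) (Ysr p l T)) (tsub (Ysr p l T) (tprod p l (Ysr p l T) (Ysr p l T)))"
    by (simp only: tprod_tsub_left[of p l "tid p" "Ysr p l T"] a b)
  also have "\<dots> = tsub (tid p) T"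
    by (intro ext) (simp add: tsub_def YY_entry)
  finally show ?thesis .
qed

lemma YZ_form:
  assumes Z: "is_tensor p 1 l Z"
  shows "tinner p 1 l Z (tprod p l (Ysr p l T) Z) \<le> tinner p 1 l Z Z"
proof -
  define F where "F n = tsc (cc n) (tpw p l T n)" for n
  have sm: "summable (\<lambda>n. F n i j k)" for i j k unfolding F_def by (rule ser_summable)
  have YZ: "tprod p l (Ysr p l T) Z = (\<lambda>i j k. \<Sum>n. tprod p l (F n) Z i j k)"
    by (intro ext) (use tprod_suminf_left[where F=F, OF sm] in \<open>simp add: Ysr_def F_def\<close>)
  have sm2: "summable (\<lambda>n. tprod p l (F n) Z i j k)" for i j k
    using tprod_suminf_left[where F=F, OF sm] by blast
  have "tinner p 1 l Z (tprod p l (Ysr p l T) Z) = (\<Sum>n. tinner p 1 l Z (tprod p l (F n) Z))"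
    unfolding YZ using tinner_suminf[where F="\<lambda>n. tprod p l (F n) Z", OF sm2] by blast
  also have "\<dots> \<le> (\<Sum>n. cc n * tinner p 1 l Z Z)"
  proof (rule suminf_le)
    show "summable (\<lambda>n. tinner p 1 l Z (tprod p l (F n) Z))" using tinner_suminf[where F="\<lambda>n. tprod p l (F n) Z", OF sm2] by blast
    show "summable (\<lambda>n. cc n * tinner p 1 l Z Z)" by (rule summable_mult2[OF cc_summable])
    fix n
    show "tinner p 1 l Z (tprod p l (F n) Z) \<le> cc n * tinner p 1 l Z Z"
      unfolding F_def tprod_tsc_left tinner_tsc_right
      by (intro mult_left_mono contr_pow_form[OF l T Z] cc_nonneg)
  qed
  also have "\<dots> = suminf cc * tinner p 1 l Z Z" by (rule suminf_mult2[OF cc_summable, symmetric])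
  also have "\<dots> \<le> 1 * tinner p 1 l Z Z" by (intro mult_right_mono cc_suminf tinner_self_nonneg)
  finally show ?thesis by simp
qed

lemma H0_psd: "t_psd p l (tsub (tid p) (Ysr p l T))"
  unfolding t_psd_def tsym_def
proof (intro conjI allI impI)
  show "is_tensor p p l (tsub (tid p) (Ysr p l T))" by (rule is_tensor_tsub[OF is_tensor_tid[OF l] Y_is])
  show "ttrans l (tsub (tid p) (Ysr p l T)) = tsub (tid p) (Ysr p l T)"
    by (simp add: ttrans_tsub ttrans_tid[OF l] Y_sym)
  fix Z assume Z: "is_tensor p 1 l Z"
  have "tinner p 1 l Z (tprod p l (tsub (tid p) (Ysr p l T)) Z) = tinner p 1 l Z Z - tinner p 1 l Z (tprod p l (Ysr p l T) Z)"
    by (simp add: tprod_tsub_left tid_left[OF l Z] tinner_tsub_right)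
  thus "0 \<le> tinner p 1 l Z (tprod p l (tsub (tid p) (Ysr p l T)) Z)" using YZ_form[OF Z] by simp
qed

end

lemma prod_le_sq:
  fixes x y s :: real
  assumes "x^2 \<le> s" "y^2 \<le> s"
  shows "\<bar>x * y\<bar> \<le> s"
proof -
  have "\<bar>x * y\<bar> \<le> (x^2 + y^2) / 2"
    using sum_squares_bound[of "\<bar>x\<bar>" "\<bar>y\<bar>"] by (simp add: abs_mult power2_eq_square field_simps)
  also have "\<dots> \<le> s" using assms by simp
  finally show ?thesis .
qed

lemma form_bound:
  assumes Z: "is_tensor p 1 l Z"
  shows "tinner p 1 l Z (tprod p l G Z) \<le> (\<Sum>i<p. \<Sum>k<l. \<Sum>t<l. \<Sum>m<p. \<bar>G i m (sb l k t)\<bar>) * tinner p 1 l Z Z"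
proof -
  let ?z = "tinner p 1 l Z Z"
  have "tinner p 1 l Z (tprod p l G Z) = (\<Sum>i<p. \<Sum>k<l. \<Sum>t<l. \<Sum>m<p. G i m (sb l k t) * (Z i 0 k * Z m 0 t))"
    by (simp add: tinner_def tprod_sb sum_distrib_left ac_simps)
  also have "\<dots> \<le> (\<Sum>i<p. \<Sum>k<l. \<Sum>t<l. \<Sum>m<p. \<bar>G i m (sb l k t)\<bar> * ?z)"
  proof (intro sum_mono)
    fix i k t m assume "i \<in> {..<p}" "k \<in> {..<l}" "t \<in> {..<l}" "m \<in> {..<p}"
    hence "\<bar>Z i 0 k * Z m 0 t\<bar> \<le> ?z"
      by (intro prod_le_sq single_le) auto
    hence "G i m (sb l k t) * (Z i 0 k * Z m 0 t) \<le> \<bar>G i m (sb l k t)\<bar> * \<bar>Z i 0 k * Z m 0 t\<bar>"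
      by (simp add: abs_mult[symmetric])
    also have "\<dots> \<le> \<bar>G i m (sb l k t)\<bar> * ?z" using \<open>\<bar>Z i 0 k * Z m 0 t\<bar> \<le> ?z\<close> by (intro mult_left_mono) auto
    finally show "G i m (sb l k t) * (Z i 0 k * Z m 0 t) \<le> \<bar>G i m (sb l k t)\<bar> * ?z" .
  qed
  also have "\<dots> = (\<Sum>i<p. \<Sum>k<l. \<Sum>t<l. \<Sum>m<p. \<bar>G i m (sb l k t)\<bar>) * ?z"
    by (simp add: sum_distrib_right)
  finally show ?thesis .
qed

theorem sqrt_exists:
  assumes l: "0 < l" and G: "t_psd p l G"
  shows "\<exists>H. t_psd p l H \<and> tprod p l H H = G"
proof -
  have Gt: "is_tensor p p l G" using G by (simp add: t_psd_def tsym_def)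
  define \<kappa> where "\<kappa> = 1 + (\<Sum>i<p. \<Sum>k<l. \<Sum>t<l. \<Sum>m<p. \<bar>G i m (sb l k t)\<bar>)"
  have kp: "\<kappa> > 0" unfolding \<kappa>_def by (simp add: add_pos_nonneg sum_nonneg)
  define T where "T = tsub (tid p) (tsc (1 / \<kappa>) G)"
  have T: "contr p l T"
    unfolding contr_def tsym_def
  proof (intro conjI allI impI)
    show "is_tensor p p l T" unfolding T_def by (intro is_tensor_tsub is_tensor_tid l is_tensor_tsc Gt)
    show "ttrans l T = T" using G unfolding T_def by (simp add: ttrans_tsub ttrans_tsc ttrans_tid[OF l] t_psd_def tsym_def)
    fix Z assume Z: "is_tensor p 1 l Z"
    have e: "tinner p 1 l Z (tprod p l T Z) = tinner p 1 l Z Z - tinner p 1 l Z (tprod p l G Z) / \<kappa>"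
      unfolding T_def by (simp add: tprod_tsub_left tid_left[OF l Z] tinner_tsub_right tprod_tsc_left tinner_tsc_right)
    have g0: "0 \<le> tinner p 1 l Z (tprod p l G Z)" using G Z by (simp add: t_psd_def)
    have "tinner p 1 l Z (tprod p l G Z) \<le> (\<kappa> - 1) * tinner p 1 l Z Z"
      using form_bound[OF Z, of G] unfolding \<kappa>_def by simp
    also have "\<dots> \<le> \<kappa> * tinner p 1 l Z Z" using tinner_self_nonneg[of p 1 l Z] by (simp add: algebra_simps)
    finally have "tinner p 1 l Z (tprod p l G Z) / \<kappa> \<le> tinner p 1 l Z Z" using kp by (simp add: field_simps)
    thus "0 \<le> tinner p 1 l Z (tprod p l T Z)" using e by simp
    show "tinner p 1 l Z (tprod p l T Z) \<le> tinner p 1 l Z Z" using e g0 kp by simp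
  qed
  define H0 where "H0 = tsub (tid p) (Ysr p l T)"
  have H0sq: "tprod p l H0 H0 = tsc (1 / \<kappa>) G"
  proof -
    have "tsub (tid p) T = tsc (1 / \<kappa>) G" unfolding T_def by (intro ext) (simp add: tsub_def)
    thus ?thesis unfolding H0_def H0_sq[OF l T] .
  qed
  have H0p: "t_psd p l H0" unfolding H0_def by (rule H0_psd[OF l T])
  define H where "H = tsc (sqrt \<kappa>) H0"
  have "tprod p l H H = tsc (sqrt \<kappa> * sqrt \<kappa>) (tprod p l H0 H0)"
    unfolding H_def by (simp only: tprod_tsc_left tprod_tsc_right) (simp add: tsc_def mult.assoc[symmetric] del: real_sqrt_mult_self)
  also have "\<dots> = G" using kp unfolding H0sq by (intro ext) (simp add: tsc_def)
  finally have HH: "tprod p l H H = G" .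
  have Hp: "t_psd p l H"
    using H0p kp unfolding H_def t_psd_def tsym_def
    by (auto simp: is_tensor_tsc ttrans_tsc tprod_tsc_left tinner_tsc_right)
  show ?thesis using HH Hp by blast
qed


definition uvec :: "nat \<Rightarrow> nat \<Rightarrow> tensor \<Rightarrow> real vec" where
  "uvec p l Z = vec (p * l) (\<lambda>r. Z (r mod p) 0 (r div p))"
definition bcm :: "nat \<Rightarrow> nat \<Rightarrow> tensor \<Rightarrow> real mat" where
  "bcm p l H = mat (p * l) (p * l) (\<lambda>(r, c). H (r mod p) (c mod p) (sb l (r div p) (c div p)))"
definition uinv :: "nat \<Rightarrow> nat \<Rightarrow> real vec \<Rightarrow> tensor" where
  "uinv p l v = (\<lambda>i j k. if i < p \<and> j = 0 \<and> k < l then v $ (k * p + i) else 0)"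

lemma div_lt_aux: "r < p * l \<Longrightarrow> r div p < (l::nat)"
  by (simp add: less_mult_imp_div_less mult.commute)

lemma lin_lt_aux: "t < l \<Longrightarrow> m < p \<Longrightarrow> t * p + m < p * (l::nat)"
proof -
  assume "t < l" "m < p"
  hence "t * p + m < t * p + p" by simp
  also have "\<dots> = (t + 1) * p" by simp
  also have "\<dots> \<le> l * p" using \<open>t < l\<close> by (intro mult_right_mono) auto
  finally show ?thesis by (simp add: mult.commute)
qed

lemma sum_split_pl:
  assumes p: "0 < (p::nat)"
  shows "(\<Sum>r<p * l. f r) = (\<Sum>t<l. \<Sum>m<p. (f (t * p + m) :: real))"
proof -
  have "(\<Sum>r<p * l. f r) = (\<Sum>x\<in>{..<l} \<times> {..<p}. f (fst x * p + snd x))"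
    by (rule sum.reindex_bij_witness[of _ "\<lambda>x. fst x * p + snd x" "\<lambda>r. (r div p, r mod p)"])
       (use p in \<open>auto intro: lin_lt_aux div_lt_aux\<close>)
  also have "\<dots> = (\<Sum>t<l. \<Sum>m<p. f (t * p + m))"
    by (simp add: sum.cartesian_product split_beta)
  finally show ?thesis .
qed

lemma uvec_carrier: "uvec p l Z \<in> carrier_vec (p * l)"
  by (simp add: uvec_def)

lemma bcm_carrier: "bcm p l H \<in> carrier_mat (p * l) (p * l)"
  by (simp add: bcm_def)

lemma bcm_mult:
  assumes p: "0 < p" and l: "0 < l" and Z: "is_tensor p 1 l Z"
  shows "bcm p l H *\<^sub>v uvec p l Z = uvec p l (tprod p l H Z)"
proof (rule eq_vecI)
  show "dim_vec (bcm p l H *\<^sub>v uvec p l Z) = dim_vec (uvec p l (tprod p l H Z))"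
    by (simp add: bcm_def uvec_def)
  fix r assume "r < dim_vec (uvec p l (tprod p l H Z))"
  hence r: "r < p * l" by (simp add: uvec_def)
  have rl: "r div p < l" by (rule div_lt_aux[OF r])
  have "(bcm p l H *\<^sub>v uvec p l Z) $ r = (\<Sum>c<p * l. H (r mod p) (c mod p) (sb l (r div p) (c div p)) * Z (c mod p) 0 (c div p))"
    using r by (simp add: bcm_def uvec_def scalar_prod_def atLeast0LessThan)
  also have "\<dots> = (\<Sum>t<l. \<Sum>m<p. H (r mod p) m (sb l (r div p) t) * Z m 0 t)"
    by (subst sum_split_pl[OF p]) simp
  also have "\<dots> = uvec p l (tprod p l H Z) $ r"
    using r rl by (simp add: uvec_def tprod_sb)
  finally show "(bcm p l H *\<^sub>v uvec p l Z) $ r = uvec p l (tprod p l H Z) $ r" .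
qed

lemma uinv_is: "is_tensor p 1 l (uinv p l v)"
  by (simp add: is_tensor_def uinv_def)

lemma uvec_uinv:
  assumes p: "0 < p" and v: "v \<in> carrier_vec (p * l)"
  shows "uvec p l (uinv p l v) = v"
proof (rule eq_vecI)
  show "dim_vec (uvec p l (uinv p l v)) = dim_vec v" using v by (simp add: uvec_def)
  fix r assume "r < dim_vec v"
  hence r: "r < p * l" using v by simp
  thus "uvec p l (uinv p l v) $ r = v $ r"
    using p div_lt_aux[OF r] by (simp add: uvec_def uinv_def mult.commute)
qed

lemma uvec_inj:
  assumes p: "0 < p" and Z: "is_tensor p 1 l Z" and W: "is_tensor p 1 l W"
    and e: "uvec p l Z = uvec p l W"
  shows "Z = W"
proof (intro ext)
  fix i j k
  show "Z i j k = W i j k"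
  proof (cases "i < p \<and> j = 0 \<and> k < l")
    case True
    hence r: "k * p + i < p * l" by (intro lin_lt_aux) auto
    have "uvec p l Z $ (k * p + i) = uvec p l W $ (k * p + i)" using e by simp
    thus ?thesis using True r by (simp add: uvec_def)
  next
    case False thus ?thesis using Z W by (auto simp: is_tensor_def)
  qed
qed

lemma uvec_zero: "uvec p l (\<lambda>_ _ _. 0) = 0\<^sub>v (p * l)"
  by (simp add: uvec_def zero_vec_def)

lemma uvec_tsc: "uvec p l (tsc x Z) = x \<cdot>\<^sub>v uvec p l Z"
  by (intro eq_vecI) (simp_all add: uvec_def tsc_def)

lemma tensor_surj:
  assumes p: "0 < p" and l: "0 < l" and H: "is_tensor p p l H"
    and inj: "\<And>Z. is_tensor p 1 l Z \<Longrightarrow> tprod p l H Z = (\<lambda>_ _ _. 0) \<Longrightarrow> Z = (\<lambda>_ _ _. 0)"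
    and W: "is_tensor p 1 l W"
  shows "\<exists>Z. is_tensor p 1 l Z \<and> tprod p l H Z = W"
proof -
  let ?N = "p * l"
  let ?M = "bcm p l H"
  have M: "?M \<in> carrier_mat ?N ?N" by (rule bcm_carrier)
  have det: "det ?M \<noteq> 0"
  proof
    assume "det ?M = 0"
    then obtain v where v: "v \<in> carrier_vec ?N" "v \<noteq> 0\<^sub>v ?N" "?M *\<^sub>v v = 0\<^sub>v ?N"
      using det_0_iff_vec_prod_zero_field[OF M] by blast
    define Z where "Z = uinv p l v"
    have Z: "is_tensor p 1 l Z" unfolding Z_def by (rule uinv_is)
    have uZ: "uvec p l Z = v" unfolding Z_def by (rule uvec_uinv[OF p v(1)])
    have "uvec p l (tprod p l H Z) = uvec p l (\<lambda>_ _ _. 0)"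
      using bcm_mult[OF p l Z, of H] uZ v(3) uvec_zero by simp
    hence "tprod p l H Z = (\<lambda>_ _ _. 0)"
      by (rule uvec_inj[OF p is_tensor_tprod[OF H Z] is_tensor_zero])
    hence "Z = (\<lambda>_ _ _. 0)" by (rule inj[OF Z])
    hence "v = 0\<^sub>v ?N" using uZ uvec_zero by simp
    thus False using v(2) by simp
  qed
  have "?M \<in> Units (ring_mat TYPE(real) ?N undefined)" by (rule det_non_zero_imp_unit[OF M det])
  then obtain B where B: "B \<in> carrier_mat ?N ?N" "?M * B = 1\<^sub>m ?N"
    unfolding Units_def ring_mat_def by auto
  define v where "v = B *\<^sub>v uvec p l W"
  have v: "v \<in> carrier_vec ?N" unfolding v_def by (rule mult_mat_vec_carrier[OF B(1) uvec_carrier])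
  define Z where "Z = uinv p l v"
  have Z: "is_tensor p 1 l Z" unfolding Z_def by (rule uinv_is)
  have "uvec p l (tprod p l H Z) = ?M *\<^sub>v uvec p l Z" by (rule bcm_mult[OF p l Z, symmetric])
  also have "\<dots> = ?M *\<^sub>v v" unfolding Z_def by (simp add: uvec_uinv[OF p v])
  also have "\<dots> = (?M * B) *\<^sub>v uvec p l W" unfolding v_def
    by (rule assoc_mult_mat_vec[symmetric, OF M B(1) uvec_carrier])
  also have "\<dots> = uvec p l W" using B(2) by (simp add: uvec_carrier)
  finally have "tprod p l H Z = W" by (rule uvec_inj[OF p is_tensor_tprod[OF H Z] W])
  thus ?thesis using Z by blast
qed

lemma tensor_inverse:
  assumes p: "0 < p" and l: "0 < l" and H: "is_tensor p p l H"
    and inj: "\<And>Z. is_tensor p 1 l Z \<Longrightarrow> tprod p l H Z = (\<lambda>_ _ _. 0) \<Longrightarrow> Z = (\<lambda>_ _ _. 0)"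
  shows "\<exists>K. is_tensor p p l K \<and> tprod p l H K = tid p"
proof -
  have ex: "\<exists>Z. is_tensor p 1 l Z \<and> tprod p l H Z = tcol j (tid p)" for j
    by (rule tensor_surj[OF p l H inj tcol_is[OF is_tensor_tid[OF l]]])
  then obtain F where F: "\<And>j. is_tensor p 1 l (F j) \<and> tprod p l H (F j) = tcol j (tid p)" by metis
  define K where "K = (\<lambda>i j k. if j < p then F j i 0 k else 0)"
  have K: "is_tensor p p l K" using F unfolding K_def is_tensor_def by auto
  have colK: "j < p \<Longrightarrow> tcol j K = F j" for j
  proof (intro ext)
    fix i j' k assume "j < p"
    show "tcol j K i j' k = F j i j' k"
      using F[of j] \<open>j < p\<close> unfolding tcol_def K_def is_tensor_def by auto
  qed
  have "tprod p l H K = tid p"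
  proof (intro ext)
    fix i j k
    show "tprod p l H K i j k = tid p i j k"
    proof (cases "j < p")
      case True
      have "tprod p l H K i j k = tcol j (tprod p l H K) i 0 k" by (simp add: tcol_def)
      also have "\<dots> = tprod p l H (F j) i 0 k" by (simp add: tprod_tcol[symmetric] colK[OF True])
      also have "\<dots> = tid p i j k" using F[of j] by (simp add: tcol_def)
      finally show ?thesis .
    next
      case False thus ?thesis using is_tensor_tprod[OF H K] by (auto simp: is_tensor_def tid_def)
    qed
  qed
  thus ?thesis using K by blast
qed

lemma eig_finite:
  assumes p: "0 < p" and l: "0 < l" and B: "is_tensor p p l B"
  shows "finite {x. \<exists>Z. is_tensor p 1 l Z \<and> Z \<noteq> (\<lambda>_ _ _. 0) \<and> tprod p l B Z = tsc x Z}"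
proof -
  let ?N = "p * l"
  let ?M = "bcm p l B"
  have M: "?M \<in> carrier_mat ?N ?N" by (rule bcm_carrier)
  have cp: "char_poly ?M \<noteq> 0"
    using degree_monic_char_poly[OF M] by auto
  have "{x. \<exists>Z. is_tensor p 1 l Z \<and> Z \<noteq> (\<lambda>_ _ _. 0) \<and> tprod p l B Z = tsc x Z} \<subseteq> {x. poly (char_poly ?M) x = 0}"
  proof
    fix x assume "x \<in> {x. \<exists>Z. is_tensor p 1 l Z \<and> Z \<noteq> (\<lambda>_ _ _. 0) \<and> tprod p l B Z = tsc x Z}"
    then obtain Z where Z: "is_tensor p 1 l Z" "Z \<noteq> (\<lambda>_ _ _. 0)" "tprod p l B Z = tsc x Z" by blast
    have "uvec p l Z \<noteq> 0\<^sub>v ?N"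
    proof
      assume "uvec p l Z = 0\<^sub>v ?N"
      hence "uvec p l Z = uvec p l (\<lambda>_ _ _. 0)" by (simp add: uvec_zero)
      hence "Z = (\<lambda>_ _ _. 0)" by (rule uvec_inj[OF p Z(1) is_tensor_zero])
      thus False using Z(2) by simp
    qed
    moreover have "?M *\<^sub>v uvec p l Z = x \<cdot>\<^sub>v uvec p l Z"
      using bcm_mult[OF p l Z(1), of B] Z(3) by (simp add: uvec_tsc)
    ultimately have "eigenvalue ?M x"
      unfolding eigenvalue_def eigenvector_def using M uvec_carrier[of p l Z] by auto
    thus "x \<in> {x. poly (char_poly ?M) x = 0}" using eigenvalue_root_char_poly[OF M] by simp
  qed
  thus ?thesis using poly_roots_finite[OF cp] finite_subset by blast
qed


lemma tprod_zero_right: "tprod p l H (\<lambda>_ _ _. 0) = (\<lambda>_ _ _. 0)"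
  by (intro ext) (simp add: tprod_def)

lemma ttrans_zero: "ttrans l (\<lambda>_ _ _. 0) = (\<lambda>_ _ _. 0)"
  by (intro ext) (simp add: ttrans_def)

lemma inj_cols:
  assumes inj: "\<And>Z. is_tensor p 1 l Z \<Longrightarrow> tprod p l H Z = (\<lambda>_ _ _. 0) \<Longrightarrow> Z = (\<lambda>_ _ _. 0)"
    and D: "is_tensor p q l D" and z: "tprod p l H D = (\<lambda>_ _ _. 0)"
  shows "D = (\<lambda>_ _ _. 0)"
proof (intro ext)
  fix i j k
  have "tprod p l H (tcol j D) = tcol j (tprod p l H D)" by (rule tprod_tcol)
  also have "\<dots> = (\<lambda>_ _ _. 0)" unfolding z by (intro ext) (simp add: tcol_def)
  finally have "tcol j D = (\<lambda>_ _ _. 0)" by (rule inj[OF tcol_is[OF D]])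
  hence "tcol j D i 0 k = 0" by simp
  thus "D i j k = 0" by (simp add: tcol_def)
qed

lemma stiefel_decomp_sq:
  assumes l: "0 < l" and P: "P \<in> Stiefel n p l" and H: "t_psd p l H"
  shows "tprod n l (ttrans l (tprod p l P H)) (tprod p l P H) = tprod p l H H"
proof -
  have Ht: "is_tensor p p l H" and Hs: "ttrans l H = H" using H by (auto simp: t_psd_def tsym_def)
  have PP: "tprod n l (ttrans l P) P = tid p" using P by (simp add: Stiefel_def)
  have "tprod n l (ttrans l (tprod p l P H)) (tprod p l P H) = tprod n l (tprod p l H (ttrans l P)) (tprod p l P H)"
    by (simp add: tprod_trans[OF l] Hs)
  also have "\<dots> = tprod p l H (tprod n l (ttrans l P) (tprod p l P H))" by (rule tprod_assoc[OF l])
  also have "tprod n l (ttrans l P) (tprod p l P H) = tprod p l (tprod n l (ttrans l P) P) H"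
    by (rule tprod_assoc[OF l, symmetric])
  also have "\<dots> = H" unfolding PP by (rule tid_left[OF l Ht])
  finally show ?thesis .
qed

lemma pd_decomp:
  assumes p: "0 < p" and l: "0 < l" and A: "is_tensor n p l A"
    and injA: "\<And>Z. is_tensor p 1 l Z \<Longrightarrow> tprod p l A Z = (\<lambda>_ _ _. 0) \<Longrightarrow> Z = (\<lambda>_ _ _. 0)"
  shows "\<exists>P H. P \<in> Stiefel n p l \<and> t_psd p l H \<and> A = tprod p l P H"
proof -
  define G where "G = tprod n l (ttrans l A) A"
  have Gp: "t_psd p l G" unfolding G_def by (rule gram_psd[OF l A])
  obtain H where H: "t_psd p l H" and HH: "tprod p l H H = G" using sqrt_exists[OF l Gp] by blast
  have Ht: "is_tensor p p l H" and Hs: "ttrans l H = H" using H by (auto simp: t_psd_def tsym_def)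
  have injH: "Z = (\<lambda>_ _ _. 0)" if Z: "is_tensor p 1 l Z" and z: "tprod p l H Z = (\<lambda>_ _ _. 0)" for Z
  proof -
    have "tprod p l G Z = tprod p l H (tprod p l H Z)" unfolding HH[symmetric] by (rule tprod_assoc[OF l])
    also have "\<dots> = (\<lambda>_ _ _. 0)" unfolding z by (rule tprod_zero_right)
    finally have "tinner n 1 l (tprod p l A Z) (tprod p l A Z) = 0"
      using gram_form[OF l A, of 1 Z] unfolding G_def by (simp add: tinner_def)
    hence "tprod p l A Z = (\<lambda>_ _ _. 0)" by (rule tinner_self_zero[OF is_tensor_tprod[OF A Z]])
    thus ?thesis by (rule injA[OF Z])
  qed
  obtain K where K: "is_tensor p p l K" and HK: "tprod p l H K = tid p"
    using tensor_inverse[OF p l Ht injH] by blast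
  have KH: "tprod p l K H = tid p"
  proof -
    have "tprod p l H (tsub (tprod p l K H) (tid p)) = tsub (tprod p l (tprod p l H K) H) H"
      by (simp add: tprod_tsub_right tid_right[OF l Ht] tprod_assoc[OF l])
    also have "\<dots> = (\<lambda>_ _ _. 0)" unfolding HK tid_left[OF l Ht] by (intro ext) (simp add: tsub_def)
    finally have zz: "tprod p l H (tsub (tprod p l K H) (tid p)) = (\<lambda>_ _ _. 0)" .
    have D: "is_tensor p p l (tsub (tprod p l K H) (tid p))"
      by (rule is_tensor_tsub[OF is_tensor_tprod[OF K Ht] is_tensor_tid[OF l]])
    have "tsub (tprod p l K H) (tid p) = (\<lambda>_ _ _. 0)"
      by (rule inj_cols[where H=H and q=p]) (fact injH, fact D, fact zz)
    thus ?thesis by (intro ext) (metis (mono_tags) eq_iff_diff_eq_0 tsub_def)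
  qed
  have KtH: "tprod p l (ttrans l K) H = tid p"
  proof -
    have "ttrans l (tprod p l H K) = tprod p l (ttrans l K) H" by (simp add: tprod_trans[OF l] Hs)
    thus ?thesis unfolding HK ttrans_tid[OF l] by simp
  qed
  define P where "P = tprod p l A K"
  have Pt: "is_tensor n p l P" unfolding P_def by (rule is_tensor_tprod[OF A K])
  have "tprod n l (ttrans l P) P = tprod n l (tprod p l (ttrans l K) (ttrans l A)) (tprod p l A K)"
    unfolding P_def by (simp add: tprod_trans[OF l])
  also have "\<dots> = tprod p l (ttrans l K) (tprod n l (ttrans l A) (tprod p l A K))" by (rule tprod_assoc[OF l])
  also have "tprod n l (ttrans l A) (tprod p l A K) = tprod p l G K" unfolding G_def by (rule tprod_assoc[OF l, symmetric])
  also have "\<dots> = tprod p l H (tprod p l H K)" unfolding HH[symmetric] by (rule tprod_assoc[OF l])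
  also have "tprod p l (ttrans l K) (tprod p l H (tprod p l H K)) = tprod p l (tprod p l (ttrans l K) H) (tprod p l H K)"
    by (rule tprod_assoc[OF l, symmetric])
  also have "\<dots> = tid p" unfolding KtH HK by (rule tid_left[OF l is_tensor_tid[OF l]])
  finally have PP: "tprod n l (ttrans l P) P = tid p" .
  have "tprod p l P H = tprod p l A (tprod p l K H)" unfolding P_def by (rule tprod_assoc[OF l])
  also have "\<dots> = A" unfolding KH by (rule tid_right[OF l A])
  finally have "A = tprod p l P H" by simp
  moreover have "P \<in> Stiefel n p l" using Pt PP by (simp add: Stiefel_def)
  ultimately show ?thesis using H by blast
qed


lemma subseq_conv:
  fixes f :: "nat \<Rightarrow> 'a \<Rightarrow> real"
  assumes "finite I" and bnd: "\<And>k x. \<bar>f k x\<bar> \<le> (B::real)"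
  shows "\<exists>r. strict_mono r \<and> (\<forall>x\<in>I. convergent (\<lambda>k. f (r k) x))"
  using assms(1)
proof (induction I rule: finite_induct)
  case empty
  have "strict_mono (\<lambda>k::nat. k)" by (simp add: strict_mono_def)
  thus ?case by blast
next
  case (insert x I)
  then obtain r where r: "strict_mono r" "\<forall>y\<in>I. convergent (\<lambda>k. f (r k) y)" by blast
  obtain s where s: "strict_mono s" "monoseq (\<lambda>n. f (r (s n)) x)"
    using seq_monosub[of "\<lambda>k. f (r k) x"] by blast
  have "Bseq (\<lambda>n. f (r (s n)) x)" by (rule BseqI'[of _ B]) (simp add: bnd)
  hence cx: "convergent (\<lambda>n. f (r (s n)) x)" using s(2) by (rule Bseq_monoseq_convergent)
  have "convergent (\<lambda>n. f (r (s n)) y)" if "y \<in> I" for y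
    using convergent_subseq_convergent[OF r(2)[rule_format, OF that] s(1)] by (simp add: o_def)
  hence "\<forall>y\<in>insert x I. convergent (\<lambda>n. f (r (s n)) y)" using cx by blast
  moreover have "strict_mono (\<lambda>n. r (s n))" by (rule strict_mono_compose[OF r(1) s(1)])
  ultimately show ?case by blast
qed

definition tconv :: "(nat \<Rightarrow> tensor) \<Rightarrow> tensor \<Rightarrow> bool" where
  "tconv X Y \<longleftrightarrow> (\<forall>i j k. (\<lambda>n. X n i j k) \<longlonglongrightarrow> Y i j k)"

lemma tconv_tprod: "tconv A A' \<Longrightarrow> tconv B B' \<Longrightarrow> tconv (\<lambda>n. tprod p l (A n) (B n)) (tprod p l A' B')"
  unfolding tconv_def tprod_def by (auto intro!: tendsto_sum tendsto_mult)

lemma tconv_ttrans: "tconv A A' \<Longrightarrow> tconv (\<lambda>n. ttrans l (A n)) (ttrans l A')"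
  unfolding tconv_def ttrans_def by auto

lemma tconv_tinner: "tconv A A' \<Longrightarrow> tconv B B' \<Longrightarrow> (\<lambda>n. tinner a b c (A n) (B n)) \<longlonglongrightarrow> tinner a b c A' B'"
  unfolding tconv_def tinner_def by (auto intro!: tendsto_sum tendsto_mult)

lemma tconv_const: "tconv (\<lambda>n. A) A"
  unfolding tconv_def by simp

lemma tconv_unique: "tconv X A \<Longrightarrow> tconv X B \<Longrightarrow> A = B"
  unfolding tconv_def by (intro ext) (blast intro: LIMSEQ_unique)

lemma tconv_eq: "tconv X A \<Longrightarrow> tconv Y B \<Longrightarrow> (\<And>n. X n = Y n) \<Longrightarrow> A = B"
proof -
  assume a: "tconv X A" "tconv Y B" "\<And>n. X n = Y n"
  have "X = Y" using a(3) by (intro ext) simp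
  thus ?thesis using a(1,2) tconv_unique by simp
qed

lemma tconv_is:
  assumes X: "tconv X A" and t: "\<And>n. is_tensor a b c (X n)"
  shows "is_tensor a b c A"
  unfolding is_tensor_def
proof (intro allI impI)
  fix i j k assume o: "a \<le> i \<or> b \<le> j \<or> c \<le> k"
  have "(\<lambda>n. X n i j k) = (\<lambda>n. 0)" using t o unfolding is_tensor_def by (intro ext) blast
  hence "(\<lambda>n. 0) \<longlonglongrightarrow> A i j k" using X unfolding tconv_def by metis
  thus "A i j k = 0" using LIMSEQ_unique[OF _ tendsto_const] by metis
qed

lemma tconv_subseq: "tconv X A \<Longrightarrow> strict_mono r \<Longrightarrow> tconv (\<lambda>n. X (r n)) A"
  unfolding tconv_def using LIMSEQ_subseq_LIMSEQ by (fastforce simp: o_def)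


lemma tprod_inner_shrink:
  assumes pn: "p \<le> n" and A0: "\<And>i m k. p \<le> m \<Longrightarrow> A i m k = 0"
  shows "tprod n l A B = tprod p l A B"
proof (intro ext)
  fix i j k
  have "(\<Sum>m<n. A i m (sb l k t) * B m j t) = (\<Sum>m<p. A i m (sb l k t) * B m j t)" for t
    by (rule sum.mono_neutral_right) (use pn A0 in auto)
  thus "tprod n l A B i j k = tprod p l A B i j k" by (simp add: tprod_sb)
qed

lemma stiefel_entry_bound:
  assumes l: "0 < l" and P: "P \<in> Stiefel n p l"
  shows "\<bar>P i j t\<bar> \<le> 1"
proof (cases "i < n \<and> j < p \<and> t < l")
  case False thus ?thesis using P by (auto simp: Stiefel_def is_tensor_def)
next
  case True
  have "1 = tid p j j 0" using True by (simp add: tid_def)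
  also have "\<dots> = tprod n l (ttrans l P) P j j 0" using P by (simp add: Stiefel_def)
  also have "\<dots> = (\<Sum>s<l. \<Sum>m<n. P m j s * P m j s)"
    using l by (simp add: tprod_sb ttrans_sb sb_lt sb_inv)
  finally have e: "(\<Sum>s<l. \<Sum>m<n. P m j s * P m j s) = 1" by simp
  have "(P i j t)^2 \<le> (\<Sum>m<n. P m j t * P m j t)"
    using True member_le_sum[of i "{..<n}" "\<lambda>m. P m j t * P m j t"] by (simp add: power2_eq_square)
  also have "\<dots> \<le> (\<Sum>s<l. \<Sum>m<n. P m j s * P m j s)"
    using True member_le_sum[of t "{..<l}" "\<lambda>s. \<Sum>m<n. P m j s * P m j s"] by (simp add: sum_nonneg)
  finally show ?thesis using e by (simp add: abs_square_le_1)
qed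

lemma decomp_exists:
  assumes p: "0 < p" and l: "0 < l" and pn: "p \<le> n" and A: "is_tensor n p l A"
  shows "\<exists>P H. P \<in> Stiefel n p l \<and> t_psd p l H \<and> A = tprod p l P H"
proof -
  define E where "E = tid p"
  have Et: "is_tensor n p l E" using pn l by (auto simp: is_tensor_def tid_def E_def)
  have EE: "tprod n l (ttrans l E) E = tid p"
  proof -
    have "tprod n l (ttrans l E) E = tprod n l (tid p) (tid p)" unfolding E_def ttrans_tid[OF l] ..
    also have "\<dots> = tprod p l (tid p) (tid p)" by (rule tprod_inner_shrink[OF pn]) (simp add: tid_def)
    also have "\<dots> = tid p" by (rule tid_left[OF l is_tensor_tid[OF l]])
    finally show ?thesis .
  qed
  define B where "B = tprod n l (ttrans l E) A"
  have Bt: "is_tensor p p l B" unfolding B_def by (rule is_tensor_tprod[OF is_tensor_ttrans[OF Et] A])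
  define R where "R = {x. \<exists>Z. is_tensor p 1 l Z \<and> Z \<noteq> (\<lambda>_ _ _. 0) \<and> tprod p l B Z = tsc x Z}"
  have R: "finite R" unfolding R_def by (rule eig_finite[OF p l Bt])
  define F where "F = (\<lambda>k::nat. - (1 / real (Suc k))) -` R"
  have inj: "inj (\<lambda>k::nat. - (1 / real (Suc k)))" by (auto simp: inj_def)
  have "finite F" unfolding F_def by (rule finite_vimageI[OF R inj])
  then obtain K where K: "\<forall>k\<in>F. k < K" using finite_nat_set_iff_bounded by blast
  define \<epsilon> where "\<epsilon> k = 1 / real (Suc (k + K))" for k
  have good: "- \<epsilon> k \<notin> R" for k
  proof
    assume "- \<epsilon> k \<in> R"
    hence "k + K \<in> F" unfolding F_def \<epsilon>_def by simp
    thus False using K by auto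
  qed
  define Ak where "Ak k = tadd A (tsc (\<epsilon> k) E)" for k
  have Akt: "is_tensor n p l (Ak k)" for k unfolding Ak_def by (intro is_tensor_tadd A is_tensor_tsc Et)
  have injk: "Z = (\<lambda>_ _ _. 0)" if Z: "is_tensor p 1 l Z" and z: "tprod p l (Ak k) Z = (\<lambda>_ _ _. 0)" for k Z
  proof (rule ccontr)
    assume nz: "Z \<noteq> (\<lambda>_ _ _. 0)"
    have e1: "tprod n l (ttrans l E) (Ak k) = tadd B (tsc (\<epsilon> k) (tid p))"
      unfolding Ak_def B_def by (simp add: tprod_tadd_right tprod_tsc_right EE)
    have "tprod p l (tadd B (tsc (\<epsilon> k) (tid p))) Z = tprod p l (tprod n l (ttrans l E) (Ak k)) Z"
      unfolding e1 ..
    also have "\<dots> = tprod n l (ttrans l E) (tprod p l (Ak k) Z)"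
      by (rule tprod_assoc[OF l])
    also have "\<dots> = (\<lambda>_ _ _. 0)" unfolding z by (rule tprod_zero_right)
    finally have "tadd (tprod p l B Z) (tsc (\<epsilon> k) Z) = (\<lambda>_ _ _. 0)"
      by (simp add: tprod_tadd_left tprod_tsc_left tid_left[OF l Z])
    hence "tprod p l B Z = tsc (- \<epsilon> k) Z"
      by (intro ext) (simp add: tadd_def tsc_def fun_eq_iff eq_neg_iff_add_eq_0)
    hence "- \<epsilon> k \<in> R" unfolding R_def using Z nz by blast
    thus False using good by blast
  qed
  have "\<forall>k. \<exists>P H. P \<in> Stiefel n p l \<and> t_psd p l H \<and> Ak k = tprod p l P H"
  proof
    fix k show "\<exists>P H. P \<in> Stiefel n p l \<and> t_psd p l H \<and> Ak k = tprod p l P H"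
      by (rule pd_decomp[OF p l Akt[of k] injk[of _ k]])
  qed
  then obtain Pk Hk where PH: "\<And>k. Pk k \<in> Stiefel n p l \<and> t_psd p l (Hk k) \<and> Ak k = tprod p l (Pk k) (Hk k)"
    by metis
  have Hk_eq: "Hk k = tprod n l (ttrans l (Pk k)) (Ak k)" for k
  proof -
    have Ht: "is_tensor p p l (Hk k)" using PH[of k] by (simp add: t_psd_def tsym_def)
    have "tprod n l (ttrans l (Pk k)) (Ak k) = tprod p l (tprod n l (ttrans l (Pk k)) (Pk k)) (Hk k)"
      using PH[of k] by (simp add: tprod_assoc[OF l])
    also have "\<dots> = Hk k" using PH[of k] tid_left[OF l Ht] by (simp add: Stiefel_def)
    finally show ?thesis by simp
  qed
  define f where "f k x = (case x of (i, j, t) \<Rightarrow> Pk k i j t)" for k and x :: "nat \<times> nat \<times> nat"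
  have bnd: "\<bar>f k x\<bar> \<le> 1" for k x
    unfolding f_def using stiefel_entry_bound[OF l conjunct1[OF PH[of k]]] by (simp add: split_beta)
  have fin: "finite ({..<n} \<times> {..<p} \<times> {..<l})" by simp
  obtain r where r: "strict_mono r" and conv: "\<forall>x\<in>{..<n} \<times> {..<p} \<times> {..<l}. convergent (\<lambda>k. f (r k) x)"
    using subseq_conv[where f=f, OF fin bnd] by blast
  define Pl where "Pl i j t = (if i < n \<and> j < p \<and> t < l then lim (\<lambda>k. Pk (r k) i j t) else 0)" for i j t
  have cP: "tconv (\<lambda>k. Pk (r k)) Pl"
    unfolding tconv_def
  proof (intro allI)
    fix i j t
    show "(\<lambda>k. Pk (r k) i j t) \<longlonglongrightarrow> Pl i j t"
    proof (cases "i < n \<and> j < p \<and> t < l")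
      case True
      hence "convergent (\<lambda>k. Pk (r k) i j t)" using conv[rule_format, of "(i, j, t)"] by (simp add: f_def)
      thus ?thesis using True by (simp add: Pl_def convergent_LIMSEQ_iff)
    next
      case False
      hence "(\<lambda>k. Pk (r k) i j t) = (\<lambda>k. 0)" using PH by (auto simp: Stiefel_def is_tensor_def)
      thus ?thesis using False by (simp add: Pl_def)
    qed
  qed
  have ceps: "(\<lambda>k. \<epsilon> (r k)) \<longlonglongrightarrow> 0"
  proof -
    have "(\<lambda>k. inverse (real (Suc (k + K)))) \<longlonglongrightarrow> 0"
      by (rule LIMSEQ_ignore_initial_segment[OF LIMSEQ_inverse_real_of_nat])
    hence "(\<lambda>k. \<epsilon> k) \<longlonglongrightarrow> 0" unfolding \<epsilon>_def by (simp add: inverse_eq_divide)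
    from LIMSEQ_subseq_LIMSEQ[OF this r] show ?thesis by (simp add: o_def)
  qed
  have cA: "tconv (\<lambda>k. Ak (r k)) A"
    unfolding tconv_def Ak_def tadd_def tsc_def
    using tendsto_add[OF tendsto_const tendsto_mult[OF ceps tendsto_const]] by simp
  define Hl where "Hl = tprod n l (ttrans l Pl) A"
  have cH: "tconv (\<lambda>k. Hk (r k)) Hl"
    unfolding Hl_def Hk_eq by (intro tconv_tprod tconv_ttrans cP cA)
  have Plt: "is_tensor n p l Pl" by (rule tconv_is[OF cP]) (use PH in \<open>simp add: Stiefel_def\<close>)
  have PlS: "Pl \<in> Stiefel n p l"
  proof -
    have "tprod n l (ttrans l Pl) Pl = tid p"
      by (rule tconv_eq[OF tconv_tprod[OF tconv_ttrans[OF cP] cP] tconv_const]) (use PH in \<open>simp add: Stiefel_def\<close>)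
    thus ?thesis using Plt by (simp add: Stiefel_def)
  qed
  have AP: "A = tprod p l Pl Hl"
    by (rule tconv_eq[OF cA tconv_tprod[OF cP cH]]) (use PH in simp)
  have Hlt: "is_tensor p p l Hl" unfolding Hl_def by (rule is_tensor_tprod[OF is_tensor_ttrans[OF Plt] A])
  have Hls: "ttrans l Hl = Hl"
    by (rule tconv_eq[OF tconv_ttrans[OF cH] cH]) (use PH in \<open>simp add: t_psd_def tsym_def\<close>)
  have Hlp: "t_psd p l Hl"
    unfolding t_psd_def tsym_def
  proof (intro conjI allI impI Hlt Hls)
    fix Z assume Z: "is_tensor p 1 l Z"
    have "(\<lambda>k. tinner p 1 l Z (tprod p l (Hk (r k)) Z)) \<longlonglongrightarrow> tinner p 1 l Z (tprod p l Hl Z)"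
      by (intro tconv_tinner tconv_const tconv_tprod cH)
    moreover have "\<forall>k. 0 \<le> tinner p 1 l Z (tprod p l (Hk (r k)) Z)"
      using PH Z by (simp add: t_psd_def)
    ultimately show "0 \<le> tinner p 1 l Z (tprod p l Hl Z)"
      by (intro LIMSEQ_le_const) auto
  qed
  show ?thesis using PlS Hlp AP by blast
qed

theorem mainTheorem15:
  fixes n p l :: nat and A :: tensor
  assumes "0 < p" and "0 < l" and "p \<le> n" and "is_tensor n p l A"
  shows "(\<exists>!H. t_psd p l H \<and> (\<exists>P \<in> Stiefel n p l. A = tprod p l P H))
    \<and> (t_pd p l (tprod n l (ttrans l A) A) \<longrightarrow>
         (\<exists>!P. P \<in> Stiefel n p l \<and> (\<exists>H. t_psd p l H \<and> A = tprod p l P H))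
         \<and> (\<forall>P H. P \<in> Stiefel n p l \<and> t_psd p l H \<and> A = tprod p l P H \<longrightarrow> t_pd p l H))"
proof -
  note p = assms(1) and l = assms(2) and pn = assms(3) and A = assms(4)
  obtain P0 H0 where P0: "P0 \<in> Stiefel n p l" and H0: "t_psd p l H0" and A0: "A = tprod p l P0 H0"
    using decomp_exists[OF p l pn A] by blast
  have sq: "tprod p l H H = tprod n l (ttrans l A) A" if "P \<in> Stiefel n p l" "t_psd p l H" "A = tprod p l P H" for P H
    using stiefel_decomp_sq[OF l that(1,2)] that(3) by simp
  have Huniq: "H1 = H2" if "P1 \<in> Stiefel n p l" "t_psd p l H1" "A = tprod p l P1 H1"
      "P2 \<in> Stiefel n p l" "t_psd p l H2" "A = tprod p l P2 H2" for P1 H1 P2 H2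
    using sqrt_unique[OF l that(2) that(5)] sq[OF that(1-3)] sq[OF that(4-6)] by simp
  have part1: "\<exists>!H. t_psd p l H \<and> (\<exists>P \<in> Stiefel n p l. A = tprod p l P H)"
  proof (rule ex1I[of _ H0])
    show "t_psd p l H0 \<and> (\<exists>P \<in> Stiefel n p l. A = tprod p l P H0)" using P0 H0 A0 by blast
    fix H assume "t_psd p l H \<and> (\<exists>P \<in> Stiefel n p l. A = tprod p l P H)"
    thus "H = H0" using Huniq[OF _ _ _ P0 H0 A0] by blast
  qed
  have part2: "(\<exists>!P. P \<in> Stiefel n p l \<and> (\<exists>H. t_psd p l H \<and> A = tprod p l P H))
         \<and> (\<forall>P H. P \<in> Stiefel n p l \<and> t_psd p l H \<and> A = tprod p l P H \<longrightarrow> t_pd p l H)"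
    if pd: "t_pd p l (tprod n l (ttrans l A) A)"
  proof -
    have injH: "Z = (\<lambda>_ _ _. 0)" if PH: "P \<in> Stiefel n p l" "t_psd p l H" "A = tprod p l P H"
      and Z: "is_tensor p 1 l Z" and z: "tprod p l H Z = (\<lambda>_ _ _. 0)" for P H Z
    proof (rule ccontr)
      assume nz: "Z \<noteq> (\<lambda>_ _ _. 0)"
      have "tprod p l (tprod n l (ttrans l A) A) Z = tprod p l H (tprod p l H Z)"
        unfolding sq[OF PH, symmetric] by (rule tprod_assoc[OF l])
      also have "\<dots> = (\<lambda>_ _ _. 0)" unfolding z by (rule tprod_zero_right)
      finally have "tinner p 1 l Z (tprod p l (tprod n l (ttrans l A) A) Z) = 0" by (simp add: tinner_def)
      moreover have "0 < tinner p 1 l Z (tprod p l (tprod n l (ttrans l A) A) Z)"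
        using pd Z nz by (simp add: t_pd_def)
      ultimately show False by simp
    qed
    have a: "\<exists>!P. P \<in> Stiefel n p l \<and> (\<exists>H. t_psd p l H \<and> A = tprod p l P H)"
    proof (rule ex1I[of _ P0])
      show "P0 \<in> Stiefel n p l \<and> (\<exists>H. t_psd p l H \<and> A = tprod p l P0 H)" using P0 H0 A0 by blast
      fix P assume "P \<in> Stiefel n p l \<and> (\<exists>H. t_psd p l H \<and> A = tprod p l P H)"
      then obtain H where P: "P \<in> Stiefel n p l" and H: "t_psd p l H" and AP: "A = tprod p l P H" by blast
      have HH0: "H = H0" by (rule Huniq[OF P H AP P0 H0 A0])
      have Ht: "is_tensor p p l H" and Hs: "ttrans l H = H" using H by (auto simp: t_psd_def tsym_def)
      define D where "D = tsub P P0"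
      have Dt: "is_tensor n p l D" unfolding D_def using P P0 by (intro is_tensor_tsub) (auto simp: Stiefel_def)
      have "tprod p l D H = tsub (tprod p l P H) (tprod p l P0 H)" unfolding D_def by (rule tprod_tsub_left)
      also have "\<dots> = (\<lambda>_ _ _. 0)" using AP A0 HH0 by (intro ext) (simp add: tsub_def)
      finally have "ttrans l (tprod p l D H) = (\<lambda>_ _ _. 0)" by (simp add: ttrans_zero)
      hence "tprod p l H (ttrans l D) = (\<lambda>_ _ _. 0)" by (simp add: tprod_trans[OF l] Hs)
      hence zz: "tprod p l H (ttrans l D) = (\<lambda>_ _ _. 0)" .
      have injH': "\<And>Z. is_tensor p 1 l Z \<Longrightarrow> tprod p l H Z = (\<lambda>_ _ _. 0) \<Longrightarrow> Z = (\<lambda>_ _ _. 0)"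
        using injH[OF P H AP] by blast
      have DT: "is_tensor p n l (ttrans l D)" by (rule is_tensor_ttrans[OF Dt])
      have "ttrans l D = (\<lambda>_ _ _. 0)"
        by (rule inj_cols[where H=H and q=n]) (fact injH', fact DT, fact zz)
      hence "D = (\<lambda>_ _ _. 0)" using ttrans_ttrans[OF l Dt] ttrans_zero by metis
      thus "P = P0" unfolding D_def tsub_def by (intro ext) (metis eq_iff_diff_eq_0)
    qed
    have b: "t_pd p l H" if PH: "P \<in> Stiefel n p l" "t_psd p l H" "A = tprod p l P H" for P H
      unfolding t_pd_def
    proof (intro conjI allI impI)
      show "tsym p l H" using PH(2) by (simp add: t_psd_def)
      fix Z assume Z: "is_tensor p 1 l Z" and nz: "Z \<noteq> (\<lambda>_ _ _. 0)"
      have ge: "0 \<le> tinner p 1 l Z (tprod p l H Z)" using PH(2) Z by (simp add: t_psd_def)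
      show "0 < tinner p 1 l Z (tprod p l H Z)"
      proof (rule ccontr)
        assume "\<not> 0 < tinner p 1 l Z (tprod p l H Z)"
        hence "tinner p 1 l Z (tprod p l H Z) = 0" using ge by simp
        hence "tprod p l H Z = (\<lambda>_ _ _. 0)" by (rule psd_zero[OF l PH(2) Z])
        hence "Z = (\<lambda>_ _ _. 0)" by (rule injH[OF PH Z])
        thus False using nz by simp
      qed
    qed
    show ?thesis using a b by blast
  qed
  show ?thesis using part1 part2 by blast
qed


end
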